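(* Let $E$ be finite, $X_+=E^{\mathbb{Z}_+}$, $X_-=E^{-\mathbb{N}}$, $X=E^{\mathbb{Z}}$. Let $\phi:X_+\to\mathbb{R}$ be continuous and satisfy the extensibility condition, let $\nu$ be a half-line Gibbs measure for $\phi$, $\rho$ the uniform Bernoulli measure on $X_-$ and $\mu_0=\rho\times\nu$. Let $\mu$ be a weak$^*$ limit point of the sequence $\tilde\mu_n:=\frac1n\sum_{i=0}^{n-1}\mu_0\circ S^{-i}$. Then $\mu$ is a translation-invariant Gibbs measure for the whole-line specification $\overset{\rightleftharpoons}{\gamma}^{\phi}$.
   Context: $S$ is the left shift on $X_+$ and $X$, $S_n\phi=\sum_{k=0}^{n-1}\phi\circ S^k$; strings like $x_{-n}^{-1}ax_1^\infty$ are viewed as elements of $X_+$ by re-indexing their first coordinate as $0$. Extensibility condition: for all $a_0,b_0\in E$, $\sum_{i=0}^n(\phi(x_{-i}^{-1}b_0x_1^\infty)-\phi(x_{-i}^{-1}a_0x_1^\infty))$ converges uniformly in $x\in X$. Half-line Gibbs measure: a probability $\nu$ on $X_+$ with $\nu(x_0^{n-1}=a_0^{n-1}\mid x_n^\infty)=\exp(S_n\phi(a_0^{n-1}x_n^\infty))/\sum_{\bar a_0^{n-1}}\exp(S_n\phi(\bar a_0^{n-1}x_n^\infty))$ a.s. for all $n\ge1$. For extensible $\phi$, $\overset{\rightleftharpoons}{\gamma}^{\phi}$ is the unique translation-invariant quasilocal non-null specification on $X$ with single-site kernels $\overset{\rightleftharpoons}{\gamma}^{\phi}_{\{i\}}(\sigma_i|\omega_{\{i\}^c})=\lim_{p\to\infty}e^{S_{i+p+1}\phi(\omega_{-p}^{i-1}\sigma_i\omega_{i+1}^\infty)}/\sum_{\bar\omega_i}e^{S_{i+p+1}\phi(\omega_{-p}^{i-1}\bar\omega_i\omega_{i+1}^\infty)}$;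 $\mu$ is Gibbs for it iff for each $i$ the conditional law of $x_i$ given $x_{\{i\}^c}$ under $\mu$ is $\overset{\rightleftharpoons}{\gamma}^{\phi}_{\{i\}}$ a.s. Translation-invariant means $\mu\circ S^{-1}=\mu$. *)

theory Defs
  imports "HOL-Probability.Probability"
begin

text \<open>X_- = E^{-N} is coded as nat => 'e,
  coordinate j standing for site -(j+1).\<close>

definition Xp :: "(nat \<Rightarrow> 'e) measure" where
  "Xp = PiM UNIV (\<lambda>_. count_space UNIV)"

definition Xz :: "(int \<Rightarrow> 'e) measure" where
  "Xz = PiM UNIV (\<lambda>_. count_space UNIV)"

definition Xp_top :: "(nat \<Rightarrow> 'e) topology" where
  "Xp_top = product_topology (\<lambda>_. discrete_topology UNIV) UNIV"

definition Xz_top :: "(int \<Rightarrow> 'e) topology" where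
  "Xz_top = product_topology (\<lambda>_. discrete_topology UNIV) UNIV"

definition shiftp :: "(nat \<Rightarrow> 'e) \<Rightarrow> nat \<Rightarrow> 'e" where
  "shiftp x = (\<lambda>i. x (Suc i))"

definition shiftz :: "(int \<Rightarrow> 'e) \<Rightarrow> int \<Rightarrow> 'e" where
  "shiftz x = (\<lambda>i. x (i + 1))"

definition birkhoff_sum :: "((nat \<Rightarrow> 'e) \<Rightarrow> real) \<Rightarrow> nat \<Rightarrow> (nat \<Rightarrow> 'e) \<Rightarrow> real" where
  "birkhoff_sum \<phi> n x = (\<Sum>k<n. \<phi> ((shiftp ^^ k) x))"

definition prefix_concat :: "nat \<Rightarrow> (nat \<Rightarrow> 'e) \<Rightarrow> (nat \<Rightarrow> 'e) \<Rightarrow> nat \<Rightarrow> 'e" where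
  "prefix_concat n a x = (\<lambda>i. if i < n then a i else x i)"

text \<open>x_{-i}^{-1} b x_1^\<infinity>, re-indexed so that its first coordinate (site -i) is 0.\<close>
definition past_window :: "(int \<Rightarrow> 'e) \<Rightarrow> nat \<Rightarrow> 'e \<Rightarrow> nat \<Rightarrow> 'e" where
  "past_window x i b = (\<lambda>j. if int j = int i then b else x (int j - int i))"

definition extensible :: "((nat \<Rightarrow> 'e) \<Rightarrow> real) \<Rightarrow> bool" where
  "extensible \<phi> \<longleftrightarrow> (\<forall>a0 b0. uniformly_convergent_on UNIV
      (\<lambda>n x. \<Sum>i\<le>n. \<phi> (past_window x i b0) - \<phi> (past_window x i a0)))"

definition tail_algebra :: "nat \<Rightarrow> (nat \<Rightarrow> 'e) measure" where
  "tail_algebra n = vimage_algebra (space Xp) (\<lambda>x. restrict x {n..})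
                      (PiM {n..} (\<lambda>_. count_space UNIV))"

definition half_line_gibbs :: "((nat \<Rightarrow> 'e::finite) \<Rightarrow> real) \<Rightarrow> (nat \<Rightarrow> 'e) measure \<Rightarrow> bool" where
  "half_line_gibbs \<phi> \<nu> \<longleftrightarrow> prob_space \<nu> \<and> sets \<nu> = sets Xp \<and>
     (\<forall>n\<ge>1. \<forall>a. AE x in \<nu>.
        real_cond_exp \<nu> (restr_to_subalg \<nu> (tail_algebra n)) (indicator {y. \<forall>i<n. y i = a i}) x
        = exp (birkhoff_sum \<phi> n (prefix_concat n a x)) /
          (\<Sum>a'\<in>PiE {..<n} (\<lambda>_. UNIV). exp (birkhoff_sum \<phi> n (prefix_concat n a' x))))"

definition rho :: "(nat \<Rightarrow> 'e::finite) measure" where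
  "rho = PiM UNIV (\<lambda>_. uniform_count_measure UNIV)"

definition glue :: "(nat \<Rightarrow> 'e) \<times> (nat \<Rightarrow> 'e) \<Rightarrow> int \<Rightarrow> 'e" where
  "glue = (\<lambda>(w, x) i. if i < 0 then w (nat (- i - 1)) else x (nat i))"

definition mu0 :: "(nat \<Rightarrow> 'e::finite) measure \<Rightarrow> (int \<Rightarrow> 'e) measure" where
  "mu0 \<nu> = distr (rho \<Otimes>\<^sub>M \<nu>) Xz glue"

text \<open>omega_{-p}^\<infinity>, re-indexed so that site -p becomes 0.\<close>
definition window :: "(int \<Rightarrow> 'e) \<Rightarrow> nat \<Rightarrow> nat \<Rightarrow> 'e" where
  "window w p = (\<lambda>j. w (int j - int p))"

definition gamma_kernel :: "((nat \<Rightarrow> 'e::finite) \<Rightarrow> real) \<Rightarrow> int \<Rightarrow> 'e \<Rightarrow> (int \<Rightarrow> 'e) \<Rightarrow> real" where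
  "gamma_kernel \<phi> i \<sigma> w = lim (\<lambda>p::nat.
      exp (birkhoff_sum \<phi> (nat (i + int p + 1)) (window (w(i := \<sigma>)) p)) /
      (\<Sum>\<tau>\<in>UNIV. exp (birkhoff_sum \<phi> (nat (i + int p + 1)) (window (w(i := \<tau>)) p))))"

definition site_compl_algebra :: "int \<Rightarrow> (int \<Rightarrow> 'e) measure" where
  "site_compl_algebra i = vimage_algebra (space Xz) (\<lambda>x. restrict x (- {i}))
                      (PiM (- {i}) (\<lambda>_. count_space UNIV))"

definition gibbs_whole_line :: "((nat \<Rightarrow> 'e::finite) \<Rightarrow> real) \<Rightarrow> (int \<Rightarrow> 'e) measure \<Rightarrow> bool" where
  "gibbs_whole_line \<phi> \<mu> \<longleftrightarrow> prob_space \<mu> \<and> sets \<mu> = sets Xz \<and>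
     (\<forall>i \<sigma>. AE w in \<mu>.
        real_cond_exp \<mu> (restr_to_subalg \<mu> (site_compl_algebra i)) (indicator {x. x i = \<sigma>}) w
        = gamma_kernel \<phi> i \<sigma> w)"

definition translation_invariant :: "(int \<Rightarrow> 'e) measure \<Rightarrow> bool" where
  "translation_invariant \<mu> \<longleftrightarrow> distr \<mu> Xz shiftz = \<mu>"

definition weak_star_limit_point_avg :: "(int \<Rightarrow> 'e) measure \<Rightarrow> (int \<Rightarrow> 'e) measure \<Rightarrow> bool" where
  "weak_star_limit_point_avg \<mu> \<mu>\<^sub>0 \<longleftrightarrow> prob_space \<mu> \<and> sets \<mu> = sets Xz \<and>
     (\<exists>r. strict_mono r \<and> (\<forall>f. continuous_map Xz_top euclideanreal f \<longrightarrow>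
        (\<lambda>k. (1 / real (r k)) * (\<Sum>i<r k. integral\<^sup>L (distr \<mu>\<^sub>0 Xz (shiftz ^^ i)) f))
          \<longlonglongrightarrow> integral\<^sup>L \<mu> f))"

end

theory Submission
  imports Defs
begin

lemma space_Xz[simp]: "space (Xz::(int\<Rightarrow>'e) measure) = UNIV" by (simp add: Xz_def space_PiM)
lemma space_Xp[simp]: "space (Xp::(nat\<Rightarrow>'e) measure) = UNIV" by (simp add: Xp_def space_PiM)
lemma topspace_Xz[simp]: "topspace (Xz_top::(int\<Rightarrow>'e) topology) = UNIV" by (simp add: Xz_top_def)
lemma topspace_Xp[simp]: "topspace (Xp_top::(nat\<Rightarrow>'e) topology) = UNIV" by (simp add: Xp_top_def)

lemma cyl_sets:
  fixes D :: "'i set"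
  assumes "finite D"
  shows "{x. \<forall>i\<in>D. x i \<in> U i} \<in> sets (PiM UNIV (\<lambda>_::'i. count_space (UNIV::'e set)))"
proof -
  have [measurable]: "Measurable.pred (PiM UNIV (\<lambda>_::'i. count_space (UNIV::'e set))) (\<lambda>x. x i \<in> U i)" for i :: 'i
    using measurable_component_singleton[of i UNIV "\<lambda>_::'i. count_space (UNIV::'e set)"]
    by (intro pred_sets2[where N="count_space UNIV"]) auto
  have "{x. \<forall>i\<in>D. x i \<in> U i} = {x\<in>space (PiM UNIV (\<lambda>_::'i. count_space (UNIV::'e set))). \<forall>i\<in>D. x i \<in> U i}"
    by (simp add: space_PiM)
  also have "\<dots> \<in> sets (PiM UNIV (\<lambda>_::'i. count_space (UNIV::'e set)))"
    using assms by measurable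
  finally show ?thesis .
qed

lemma cont_meas:
  fixes f :: "('i::countable \<Rightarrow> 'e::finite) \<Rightarrow> real"
  assumes "continuous_map (product_topology (\<lambda>_. discrete_topology (UNIV::'e set)) UNIV) euclideanreal f"
  shows "f \<in> borel_measurable (PiM UNIV (\<lambda>_. count_space UNIV))"
proof (rule borel_measurableI)
  fix S :: "real set" assume "open S"
  let ?T = "product_topology (\<lambda>_::'i. discrete_topology (UNIV::'e set)) UNIV"
  have op: "openin ?T (f -` S)"
    using assms \<open>open S\<close> unfolding continuous_map_def by (auto simp: vimage_def)
  define \<U> where "\<U> = {U :: 'i \<Rightarrow> 'e set. finite {i. U i \<noteq> UNIV}}"
  have eq: "f -` S = \<Union> ((\<lambda>U. Pi\<^sub>E UNIV U) ` {U\<in>\<U>. Pi\<^sub>E UNIV U \<subseteq> f -` S})"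
  proof
    show "f -` S \<subseteq> \<Union> ((\<lambda>U. Pi\<^sub>E UNIV U) ` {U\<in>\<U>. Pi\<^sub>E UNIV U \<subseteq> f -` S})"
    proof
      fix x assume "x \<in> f -` S"
      from op[unfolded openin_product_topology_alt] \<open>x \<in> f -` S\<close> obtain U
        where "finite {i\<in>UNIV. U i \<noteq> topspace (discrete_topology (UNIV::'e set))}" "x \<in> Pi\<^sub>E UNIV U" "Pi\<^sub>E UNIV U \<subseteq> f -` S"
        by blast
      then have "finite {i. U i \<noteq> UNIV}" "x \<in> Pi\<^sub>E UNIV U" "Pi\<^sub>E UNIV U \<subseteq> f -` S" by auto
      then show "x \<in> \<Union> ((\<lambda>U. Pi\<^sub>E UNIV U) ` {U\<in>\<U>. Pi\<^sub>E UNIV U \<subseteq> f -` S})"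
        unfolding \<U>_def by blast
    qed
  qed auto
  have cU: "countable \<U>"
  proof -
    have inj: "inj_on (\<lambda>U. {(i, U i) | i. U i \<noteq> UNIV}) \<U>"
    proof (rule inj_onI)
      fix U V assume "U \<in> \<U>" "V \<in> \<U>" and e: "{(i, U i) | i. U i \<noteq> UNIV} = {(i, V i) | i. V i \<noteq> UNIV}"
      show "U = V"
      proof
        fix i show "U i = V i"
        proof (rule ccontr)
          assume ne: "U i \<noteq> V i"
          show False
          proof (cases "U i = UNIV")
            case True
            then have "V i \<noteq> UNIV" using ne by auto
            then have "(i, V i) \<in> {(i, V i) | i. V i \<noteq> UNIV}" by blast
            then have "(i, V i) \<in> {(i, U i) | i. U i \<noteq> UNIV}" by (simp only: e)
            then show False using ne by auto
          next
            case False
            then have "(i, U i) \<in> {(i, U i) | i. U i \<noteq> UNIV}" by blast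
            then have "(i, U i) \<in> {(i, V i) | i. V i \<noteq> UNIV}" by (simp only: e)
            then show False using ne by auto
          qed
        qed
      qed
    qed
    have sub: "(\<lambda>U. {(i, U i) | i. U i \<noteq> UNIV}) ` \<U> \<subseteq> Collect finite"
    proof
      fix A assume "A \<in> (\<lambda>U. {(i, U i) | i. U i \<noteq> UNIV}) ` \<U>"
      then obtain U where U: "U \<in> \<U>" "A = {(i, U i) | i. U i \<noteq> UNIV}" by blast
      then have "A = (\<lambda>i. (i, U i)) ` {i. U i \<noteq> UNIV}" by auto
      then show "A \<in> Collect finite" using U(1) unfolding \<U>_def by auto
    qed
    have "countable ((\<lambda>U. {(i, U i) | i. U i \<noteq> UNIV}) ` \<U>)"
      by (rule countable_subset[OF sub countable_Collect_finite])
    then show ?thesis using inj by (rule countable_image_inj_on)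
  qed
  have "\<Union> ((\<lambda>U. Pi\<^sub>E UNIV U) ` {U\<in>\<U>. Pi\<^sub>E UNIV U \<subseteq> f -` S}) \<in> sets (PiM UNIV (\<lambda>_::'i. count_space (UNIV::'e set)))"
  proof (rule sets.countable_Union)
    show "countable ((\<lambda>U. Pi\<^sub>E UNIV U) ` {U\<in>\<U>. Pi\<^sub>E UNIV U \<subseteq> f -` S})"
      using cU by (intro countable_image) (rule countable_subset[of _ \<U>], auto)
    show "(\<lambda>U. Pi\<^sub>E UNIV U) ` {U\<in>\<U>. Pi\<^sub>E UNIV U \<subseteq> f -` S} \<subseteq> sets (PiM UNIV (\<lambda>_::'i. count_space (UNIV::'e set)))"
    proof safe
      fix U assume "U \<in> \<U>"
      then have "Pi\<^sub>E UNIV U = {x. \<forall>i\<in>{i. U i \<noteq> UNIV}. x i \<in> U i}" by (auto simp: PiE_iff)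
      also have "\<dots> \<in> sets (PiM UNIV (\<lambda>_::'i. count_space (UNIV::'e set)))"
        using \<open>U \<in> \<U>\<close> unfolding \<U>_def by (intro cyl_sets) auto
      finally show "Pi\<^sub>E UNIV U \<in> sets (PiM UNIV (\<lambda>_::'i. count_space (UNIV::'e set)))" .
    qed
  qed
  then show "f -` S \<inter> space (PiM UNIV (\<lambda>_::'i. count_space (UNIV::'e set))) \<in> sets (PiM UNIV (\<lambda>_::'i. count_space (UNIV::'e set)))"
    using eq by (simp add: space_PiM)
qed

lemma cont_meas_Xz: "continuous_map Xz_top euclideanreal f \<Longrightarrow> f \<in> borel_measurable (Xz :: (int \<Rightarrow> 'e::finite) measure)"
  unfolding Xz_top_def Xz_def by (rule cont_meas)
lemma cont_meas_Xp: "continuous_map Xp_top euclideanreal f \<Longrightarrow> f \<in> borel_measurable (Xp :: (nat \<Rightarrow> 'e::finite) measure)"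
  unfolding Xp_top_def Xp_def by (rule cont_meas)

lemma meas_into_PiM:
  assumes "\<And>k. (\<lambda>w. h w k) \<in> measurable N (count_space UNIV)"
  shows "h \<in> measurable N (PiM UNIV (\<lambda>_. count_space UNIV))"
  using measurable_PiM_single'[of UNIV "\<lambda>k w. h w k" N "\<lambda>_. count_space UNIV"] assms
  by (simp add: space_PiM)

lemma meas_coord: "(\<lambda>x. x t) \<in> measurable (PiM UNIV (\<lambda>_. count_space UNIV)) (count_space UNIV)"
  by (rule measurable_component_singleton) simp

lemma meas_into_Xz:
  "(\<And>k. (\<lambda>w. h w k) \<in> measurable N (count_space UNIV)) \<Longrightarrow> h \<in> measurable N Xz"
  unfolding Xz_def by (rule meas_into_PiM)
lemma meas_into_Xp:
  "(\<And>k. (\<lambda>w. h w k) \<in> measurable N (count_space UNIV)) \<Longrightarrow> h \<in> measurable N Xp"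
  unfolding Xp_def by (rule meas_into_PiM)
lemma meas_coord_Xz: "(\<lambda>x. x t) \<in> measurable Xz (count_space UNIV)"
  unfolding Xz_def by (rule meas_coord)
lemma meas_coord_Xp: "(\<lambda>x. x t) \<in> measurable Xp (count_space UNIV)"
  unfolding Xp_def by (rule meas_coord)

lemma cont_coord_Xz: "continuous_map Xz_top (discrete_topology UNIV) (\<lambda>x. x t)"
  unfolding Xz_top_def by (rule continuous_map_product_projection) simp
lemma cont_coord_Xp: "continuous_map Xp_top (discrete_topology UNIV) (\<lambda>x. x t)"
  unfolding Xp_top_def by (rule continuous_map_product_projection) simp

lemma cont_fun_coord_Xz: "continuous_map Xz_top euclideanreal (\<lambda>x. g (x t))"
proof -
  have "continuous_map Xz_top euclideanreal (g \<circ> (\<lambda>x. x t))"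
    by (rule continuous_map_compose[OF cont_coord_Xz]) simp
  then show ?thesis by (simp add: o_def)
qed

lemma cont_into_Xz:
  "(\<And>k. continuous_map X (discrete_topology UNIV) (\<lambda>w. h w k)) \<Longrightarrow> continuous_map X Xz_top h"
  unfolding Xz_top_def continuous_map_componentwise_UNIV by simp
lemma cont_into_Xp:
  "(\<And>k. continuous_map X (discrete_topology UNIV) (\<lambda>w. h w k)) \<Longrightarrow> continuous_map X Xp_top h"
  unfolding Xp_top_def continuous_map_componentwise_UNIV by simp

lemma indicator_cyl_prod:
  assumes "finite J"
  shows "indicator {x. \<forall>t\<in>J. x t \<in> V t} x = (\<Prod>t\<in>J. indicator (V t) (x t) :: real)"
proof (cases "\<forall>t\<in>J. x t \<in> V t")
  case True
  then show ?thesis by (simp add: indicator_def)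
next
  case False
  then obtain t where "t \<in> J" "x t \<notin> V t" by auto
  then have "(\<Prod>t\<in>J. indicator (V t) (x t) :: real) = 0"
    using assms by (intro prod_zero) (auto intro!: bexI[of _ t])
  then show ?thesis using False by (simp add: indicator_def)
qed

lemma cont_cyl_Xz:
  assumes "finite J"
  shows "continuous_map Xz_top euclideanreal (indicator {x. \<forall>t\<in>J. x t \<in> V t} :: _ \<Rightarrow> real)"
proof -
  have "continuous_map Xz_top euclideanreal (\<lambda>x. \<Prod>t\<in>J. indicator (V t) (x t) :: real)"
    using assms by (intro continuous_map_prod cont_fun_coord_Xz)
  then show ?thesis by (simp add: indicator_cyl_prod[OF assms, abs_def])
qed

lemma cont_shiftz: "continuous_map Xz_top Xz_top shiftz"
  unfolding shiftz_def by (intro cont_into_Xz cont_coord_Xz)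
lemma cont_shiftp: "continuous_map Xp_top Xp_top shiftp"
  unfolding shiftp_def by (intro cont_into_Xp cont_coord_Xp)
lemma cont_shiftp_pow: "continuous_map Xp_top Xp_top (shiftp ^^ k)"
proof (induction k)
  case (Suc k)
  show ?case using continuous_map_compose[OF Suc cont_shiftp] by (simp add: o_def)
qed simp

lemma meas_shiftz: "shiftz \<in> measurable Xz Xz"
  unfolding shiftz_def by (intro meas_into_Xz meas_coord_Xz)
lemma meas_shiftp: "shiftp \<in> measurable Xp Xp"
  unfolding shiftp_def by (intro meas_into_Xp meas_coord_Xp)
lemma meas_shiftp_pow: "(shiftp ^^ k) \<in> measurable Xp Xp"
proof (induction k)
  case (Suc k)
  show ?case using measurable_comp[OF Suc meas_shiftp] by (simp add: o_def)
qed simp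
lemma meas_shiftz_pow: "(shiftz ^^ k) \<in> measurable Xz Xz"
proof (induction k)
  case (Suc k)
  show ?case using measurable_comp[OF Suc meas_shiftz] by (simp add: o_def)
qed simp

lemma shiftz_pow: "(shiftz ^^ k) w = (\<lambda>t. w (t + int k))"
  by (induction k arbitrary: w) (auto simp: shiftz_def add.assoc)
lemma shiftp_pow: "(shiftp ^^ k) x = (\<lambda>t. x (t + k))"
  by (induction k arbitrary: x) (auto simp: shiftp_def)

lemma cont_window_upd: "continuous_map Xz_top Xp_top (\<lambda>w. window (w(j:=\<tau>)) p)"
proof (rule cont_into_Xp)
  fix k
  show "continuous_map Xz_top (discrete_topology UNIV) (\<lambda>w. window (w(j := \<tau>)) p k)"
  proof (cases "int k - int p = j")
    case True
    then show ?thesis by (simp add: window_def)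
  next
    case False
    then show ?thesis by (simp add: window_def cont_coord_Xz)
  qed
qed

lemma cont_birkhoff:
  assumes phi: "continuous_map Xp_top euclideanreal \<phi>"
    and h: "continuous_map X Xp_top h"
  shows "continuous_map X euclideanreal (\<lambda>w. birkhoff_sum \<phi> n (h w))"
  unfolding birkhoff_sum_def
proof (intro continuous_map_sum)
  fix k
  have "continuous_map X euclideanreal (\<phi> \<circ> ((shiftp ^^ k) \<circ> h))"
    by (intro continuous_map_compose[OF _ phi] continuous_map_compose[OF h cont_shiftp_pow])
  then show "continuous_map X euclideanreal (\<lambda>w. \<phi> ((shiftp ^^ k) (h w)))" by (simp add: o_def)
qed simp

lemma cont_exp_comp:
  assumes "continuous_map X euclideanreal f"
  shows "continuous_map X euclideanreal (\<lambda>x. exp (f x))"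
proof -
  have "continuous_map X euclideanreal (exp \<circ> f)"
    by (rule continuous_map_compose[OF assms]) (simp add: continuous_on_exp)
  then show ?thesis by (simp add: o_def)
qed

definition gp :: "((nat \<Rightarrow> 'e::finite) \<Rightarrow> real) \<Rightarrow> int \<Rightarrow> 'e \<Rightarrow> nat \<Rightarrow> (int \<Rightarrow> 'e) \<Rightarrow> real" where
  "gp \<phi> i \<sigma> p w =
      exp (birkhoff_sum \<phi> (nat (i + int p + 1)) (window (w(i := \<sigma>)) p)) /
      (\<Sum>\<tau>\<in>UNIV. exp (birkhoff_sum \<phi> (nat (i + int p + 1)) (window (w(i := \<tau>)) p)))"

lemma gamma_kernel_gp: "gamma_kernel \<phi> i \<sigma> w = lim (\<lambda>p. gp \<phi> i \<sigma> p w)"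
  unfolding gamma_kernel_def gp_def ..

definition Tsum :: "((nat \<Rightarrow> 'e) \<Rightarrow> real) \<Rightarrow> 'e \<Rightarrow> nat \<Rightarrow> (int \<Rightarrow> 'e) \<Rightarrow> 'e \<Rightarrow> real" where
  "Tsum \<phi> \<sigma> n x \<tau> = (\<Sum>i\<le>n. \<phi> (past_window x i \<tau>) - \<phi> (past_window x i \<sigma>))"

definition Rf :: "('e::finite \<Rightarrow> real) \<Rightarrow> real" where
  "Rf v = 1 / (\<Sum>\<tau>\<in>UNIV. exp (v \<tau>))"

lemma birk_window:
  assumes "j + int p \<ge> 0"
  shows "birkhoff_sum \<phi> (nat (j + int p + 1)) (window (w(j:=\<tau>)) p)
        = (\<Sum>m\<le>nat (j + int p). \<phi> (past_window (\<lambda>t. w (t + j)) m \<tau>))"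
proof -
  define n where "n = nat (j + int p)"
  have n1: "nat (j + int p + 1) = Suc n" using assms unfolding n_def by simp
  have nint: "int n = j + int p" using assms unfolding n_def by simp
  have pw: "(shiftp ^^ (n - k)) (window (w(j:=\<tau>)) p) = past_window (\<lambda>t. w (t + j)) k \<tau>"
    if "k < Suc n" for k
  proof
    fix t
    have e: "int (t + (n - k)) - int p = int t - int k + j" using that nint by simp
    show "(shiftp ^^ (n - k)) (window (w(j:=\<tau>)) p) t = past_window (\<lambda>t. w (t + j)) k \<tau> t"
      unfolding shiftp_pow window_def past_window_def e by auto
  qed
  have "birkhoff_sum \<phi> (Suc n) (window (w(j:=\<tau>)) p)
      = (\<Sum>k<Suc n. \<phi> ((shiftp ^^ (Suc n - Suc k)) (window (w(j:=\<tau>)) p)))"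
    unfolding birkhoff_sum_def by (rule sum.nat_diff_reindex[symmetric])
  also have "\<dots> = (\<Sum>k<Suc n. \<phi> (past_window (\<lambda>t. w (t + j)) k \<tau>))"
    by (rule sum.cong) (simp_all add: pw)
  also have "\<dots> = (\<Sum>m\<le>n. \<phi> (past_window (\<lambda>t. w (t + j)) m \<tau>))"
    by (simp add: lessThan_Suc_atMost)
  finally show ?thesis using n1 n_def by simp
qed

lemma gp_Rf:
  assumes "j + int p \<ge> 0"
  shows "gp \<phi> j \<sigma> p w = Rf (Tsum \<phi> \<sigma> (nat (j + int p)) (\<lambda>t. w (t + j)))"
proof -
  define S where "S \<tau> = birkhoff_sum \<phi> (nat (j + int p + 1)) (window (w(j:=\<tau>)) p)" for \<tau>
  have TS: "Tsum \<phi> \<sigma> (nat (j + int p)) (\<lambda>t. w (t + j)) \<tau> = S \<tau> - S \<sigma>" for \<tau>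
    unfolding S_def birk_window[OF assms] Tsum_def by (simp add: sum_subtractf)
  have "gp \<phi> j \<sigma> p w = exp (S \<sigma>) / (\<Sum>\<tau>\<in>UNIV. exp (S \<tau>))"
    unfolding gp_def S_def ..
  also have "\<dots> = 1 / (\<Sum>\<tau>\<in>UNIV. exp (S \<tau> - S \<sigma>))"
    by (simp add: exp_diff sum_divide_distrib[symmetric])
  also have "\<dots> = Rf (Tsum \<phi> \<sigma> (nat (j + int p)) (\<lambda>t. w (t + j)))"
    unfolding Rf_def TS ..
  finally show ?thesis .
qed

lemma Tsum_self[simp]: "Tsum \<phi> \<sigma> n x \<sigma> = 0"
  unfolding Tsum_def by simp

lemma Rf_le1:
  assumes "v \<sigma> = 0"
  shows "Rf v \<le> 1" "Rf v > 0" "(\<Sum>\<tau>\<in>UNIV. exp (v \<tau>)) \<ge> 1"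
proof -
  have "exp (v \<sigma>) \<le> (\<Sum>\<tau>\<in>UNIV. exp (v \<tau>))"
    by (rule member_le_sum) auto
  then show s: "(\<Sum>\<tau>\<in>UNIV. exp (v \<tau>)) \<ge> 1" using assms by simp
  then show "Rf v \<le> 1" "Rf v > 0" unfolding Rf_def by auto
qed

lemma Rf_le_exp:
  assumes "v \<sigma> = 0" "v' \<sigma> = 0" "\<And>\<tau>. \<bar>v \<tau> - v' \<tau>\<bar> \<le> \<delta>"
  shows "Rf v \<le> exp \<delta> * Rf v'"
proof -
  have s: "(\<Sum>\<tau>\<in>UNIV. exp (v \<tau>)) \<ge> 1" "(\<Sum>\<tau>\<in>UNIV. exp (v' \<tau>)) \<ge> 1"
    using Rf_le1 assms by blast+
  have "(\<Sum>\<tau>\<in>UNIV. exp (v' \<tau>)) \<le> (\<Sum>\<tau>\<in>UNIV. exp \<delta> * exp (v \<tau>))"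
  proof (rule sum_mono)
    fix \<tau> :: 'a
    have "v' \<tau> \<le> \<delta> + v \<tau>" using assms(3)[of \<tau>] by linarith
    then show "exp (v' \<tau>) \<le> exp \<delta> * exp (v \<tau>)" by (simp add: exp_add[symmetric])
  qed
  also have "\<dots> = exp \<delta> * (\<Sum>\<tau>\<in>UNIV. exp (v \<tau>))" by (simp add: sum_distrib_left)
  finally have "(\<Sum>\<tau>\<in>UNIV. exp (v' \<tau>)) \<le> exp \<delta> * (\<Sum>\<tau>\<in>UNIV. exp (v \<tau>))" .
  then show ?thesis using s unfolding Rf_def
    by (simp add: field_simps)
qed

lemma Rf_close:
  assumes "v \<sigma> = 0" "v' \<sigma> = 0" "\<And>\<tau>. \<bar>v \<tau> - v' \<tau>\<bar> \<le> \<delta>"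
  shows "\<bar>Rf v - Rf v'\<bar> \<le> exp \<delta> - 1"
proof -
  have d: "\<delta> \<ge> 0" using assms(3)[of \<sigma>] assms(1,2) by simp
  have a: "Rf v \<le> exp \<delta> * Rf v'" by (rule Rf_le_exp[of v \<sigma> v']) (use assms in auto)
  have b: "Rf v' \<le> exp \<delta> * Rf v" by (rule Rf_le_exp[of v' \<sigma> v]) (use assms in \<open>auto simp: abs_minus_commute\<close>)
  have c: "Rf v \<le> 1" "Rf v' \<le> 1" "Rf v > 0" "Rf v' > 0" using Rf_le1 assms by blast+
  have e: "exp \<delta> \<ge> 1" using d by simp
  have "Rf v - Rf v' \<le> (exp \<delta> - 1) * Rf v'" using a by (simp add: algebra_simps)
  also have "\<dots> \<le> exp \<delta> - 1" using c e by (simp add: mult_left_le)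
  finally have 1: "Rf v - Rf v' \<le> exp \<delta> - 1" .
  have "Rf v' - Rf v \<le> (exp \<delta> - 1) * Rf v" using b by (simp add: algebra_simps)
  also have "\<dots> \<le> exp \<delta> - 1" using c e by (simp add: mult_left_le)
  finally have 2: "Rf v' - Rf v \<le> exp \<delta> - 1" .
  show ?thesis using 1 2 by linarith
qed

lemma gp_bounds: "0 < gp \<phi> j \<sigma> p w" "gp \<phi> j \<sigma> p w \<le> 1"
proof -
  define S where "S \<tau> = birkhoff_sum \<phi> (nat (j + int p + 1)) (window (w(j:=\<tau>)) p)" for \<tau>
  have le: "exp (S \<sigma>) \<le> (\<Sum>\<tau>\<in>UNIV. exp (S \<tau>))" by (rule member_le_sum) auto
  have pos: "0 < (\<Sum>\<tau>\<in>UNIV. exp (S \<tau>))" by (rule sum_pos) auto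
  have "gp \<phi> j \<sigma> p w = exp (S \<sigma>) / (\<Sum>\<tau>\<in>UNIV. exp (S \<tau>))" unfolding gp_def S_def ..
  then show "0 < gp \<phi> j \<sigma> p w" "gp \<phi> j \<sigma> p w \<le> 1" using le pos by auto
qed

lemma cont_gp:
  assumes phi: "continuous_map Xp_top euclideanreal \<phi>"
  shows "continuous_map Xz_top euclideanreal (gp \<phi> j \<sigma> p)"
proof -
  have c: "continuous_map Xz_top euclideanreal
      (\<lambda>w. exp (birkhoff_sum \<phi> (nat (j + int p + 1)) (window (w(j := \<tau>)) p)))" for \<tau>
    by (intro cont_exp_comp cont_birkhoff[OF phi] cont_window_upd)
  have "continuous_map Xz_top euclideanreal (\<lambda>w.
      exp (birkhoff_sum \<phi> (nat (j + int p + 1)) (window (w(j := \<sigma>)) p)) /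
      (\<Sum>\<tau>\<in>UNIV. exp (birkhoff_sum \<phi> (nat (j + int p + 1)) (window (w(j := \<tau>)) p))))"
  proof (rule continuous_map_real_divide)
    show "continuous_map Xz_top euclideanreal
        (\<lambda>w. \<Sum>\<tau>\<in>UNIV. exp (birkhoff_sum \<phi> (nat (j + int p + 1)) (window (w(j := \<tau>)) p)))"
      by (intro continuous_map_sum c) auto
    show "(\<Sum>\<tau>\<in>UNIV. exp (birkhoff_sum \<phi> (nat (j + int p + 1)) (window (w(j := \<tau>)) p))) \<noteq> 0" for w
      using sum_pos[of UNIV "\<lambda>\<tau>. exp (birkhoff_sum \<phi> (nat (j + int p + 1)) (window (w(j := \<tau>)) p))"]
      by auto
  qed (rule c)
  then show ?thesis unfolding gp_def[abs_def] .
qed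

lemma gamma_unif:
  assumes ext: "extensible \<phi>"
  shows "\<And>\<epsilon>. \<epsilon> > 0 \<Longrightarrow> \<forall>\<^sub>F p in sequentially. \<forall>w. \<bar>gp \<phi> j \<sigma> p w - gamma_kernel \<phi> j \<sigma> w\<bar> < \<epsilon>"
    and "\<And>w. 0 < gamma_kernel \<phi> j \<sigma> w" "\<And>w. gamma_kernel \<phi> j \<sigma> w \<le> 1"
proof -
  have "\<forall>\<tau>. \<exists>l. uniform_limit UNIV (\<lambda>n x. Tsum \<phi> \<sigma> n x \<tau>) l sequentially"
    using ext unfolding extensible_def uniformly_convergent_on_def Tsum_def by blast
  then obtain TL where TL: "\<And>\<tau>. uniform_limit UNIV (\<lambda>n x. Tsum \<phi> \<sigma> n x \<tau>) (TL \<tau>) sequentially"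
    by metis
  have TLs: "TL \<sigma> x = 0" for x
  proof -
    have "\<bar>TL \<sigma> x\<bar> < e" if "e > 0" for e
    proof -
      from uniform_limitD[OF TL[of \<sigma>] that] obtain n where "\<forall>x\<in>UNIV. dist (Tsum \<phi> \<sigma> n x \<sigma>) (TL \<sigma> x) < e"
        by (auto dest: eventually_happens)
      then show ?thesis by (simp add: dist_real_def)
    qed
    then show ?thesis by (metis abs_ge_zero abs_zero less_irrefl zero_less_abs_iff)
  qed
  define Ginf where "Ginf w = Rf (\<lambda>\<tau>. TL \<tau> (\<lambda>t. w (t + j)))" for w
  have U: "\<forall>\<^sub>F p in sequentially. \<forall>w. \<bar>gp \<phi> j \<sigma> p w - Ginf w\<bar> < \<epsilon>" if "\<epsilon> > 0" for \<epsilon>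
  proof -
    define \<delta> where "\<delta> = ln (1 + \<epsilon>/2)"
    have dpos: "\<delta> > 0" unfolding \<delta>_def using that by simp
    have ed: "exp \<delta> - 1 = \<epsilon>/2" unfolding \<delta>_def using that by simp
    have "\<forall>\<^sub>F n in sequentially. \<forall>\<tau>. \<forall>x\<in>UNIV. dist (Tsum \<phi> \<sigma> n x \<tau>) (TL \<tau> x) < \<delta>"
      by (intro eventually_all_finite uniform_limitD[OF TL dpos])
    then obtain N where N: "\<And>n \<tau> x. n \<ge> N \<Longrightarrow> \<bar>Tsum \<phi> \<sigma> n x \<tau> - TL \<tau> x\<bar> < \<delta>"
      unfolding eventually_sequentially dist_real_def by blast
    show ?thesis
    proof (rule eventually_sequentiallyI[of "N + nat (- j)"])
      fix p assume p: "N + nat (- j) \<le> p"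
      then have jp: "j + int p \<ge> 0" and nN: "nat (j + int p) \<ge> N" by auto
      show "\<forall>w. \<bar>gp \<phi> j \<sigma> p w - Ginf w\<bar> < \<epsilon>"
      proof
        fix w
        have "\<bar>gp \<phi> j \<sigma> p w - Ginf w\<bar> =
           \<bar>Rf (Tsum \<phi> \<sigma> (nat (j + int p)) (\<lambda>t. w (t + j))) - Rf (\<lambda>\<tau>. TL \<tau> (\<lambda>t. w (t + j)))\<bar>"
          unfolding gp_Rf[OF jp] Ginf_def ..
        also have "\<dots> \<le> exp \<delta> - 1"
          by (rule Rf_close[where \<sigma>=\<sigma>]) (use TLs N[OF nN] in \<open>auto intro: less_imp_le\<close>)
        also have "\<dots> < \<epsilon>" using ed that by simp
        finally show "\<bar>gp \<phi> j \<sigma> p w - Ginf w\<bar> < \<epsilon>" .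
      qed
    qed
  qed
  have lim: "gamma_kernel \<phi> j \<sigma> w = Ginf w" for w
  proof -
    have "(\<lambda>p. gp \<phi> j \<sigma> p w) \<longlonglongrightarrow> Ginf w"
    proof (rule tendstoI)
      fix e :: real assume "e > 0"
      from U[OF this] show "\<forall>\<^sub>F p in sequentially. dist (gp \<phi> j \<sigma> p w) (Ginf w) < e"
        by eventually_elim (simp add: dist_real_def)
    qed
    then show ?thesis unfolding gamma_kernel_gp by (rule limI)
  qed
  show "\<forall>\<^sub>F p in sequentially. \<forall>w. \<bar>gp \<phi> j \<sigma> p w - gamma_kernel \<phi> j \<sigma> w\<bar> < \<epsilon>" if "\<epsilon> > 0" for \<epsilon>
    using U[OF that] by (simp add: lim)
  show "0 < gamma_kernel \<phi> j \<sigma> w" "gamma_kernel \<phi> j \<sigma> w \<le> 1" for w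
    unfolding lim Ginf_def using Rf_le1[of "\<lambda>\<tau>. TL \<tau> (\<lambda>t. w (t + j))" \<sigma>] TLs by auto
qed

lemma cont_gamma:
  assumes phi: "continuous_map Xp_top euclideanreal \<phi>" and ext: "extensible \<phi>"
  shows "continuous_map Xz_top euclideanreal (gamma_kernel \<phi> j \<sigma>)"
proof -
  have "continuous_map Xz_top Met_TC.mtopology (gamma_kernel \<phi> j \<sigma>)"
  proof (rule Met_TC.continuous_map_uniform_limit[where F=sequentially and f="\<lambda>p. gp \<phi> j \<sigma> p"])
    show "\<forall>\<^sub>F p in sequentially. continuous_map Xz_top Met_TC.mtopology (gp \<phi> j \<sigma> p)"
      using cont_gp[OF phi] by simp
    fix e :: real assume "e > 0"
    from gamma_unif(1)[OF ext this, of j \<sigma>]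
    show "\<forall>\<^sub>F p in sequentially. \<forall>x\<in>topspace Xz_top. gamma_kernel \<phi> j \<sigma> x \<in> UNIV \<and> dist (gp \<phi> j \<sigma> p x) (gamma_kernel \<phi> j \<sigma> x) < e"
      by eventually_elim (simp add: dist_real_def)
  qed simp
  then show ?thesis by simp
qed

lemma prefix_concat_twice[simp]: "prefix_concat n b (prefix_concat n a x) = prefix_concat n b x"
  by (auto simp: prefix_concat_def)

lemma meas_prefix_concat: "prefix_concat n a \<in> measurable Xp Xp"
  unfolding prefix_concat_def
proof (intro meas_into_Xp)
  fix k
  show "(\<lambda>w. if k < n then a k else w k) \<in> Xp \<rightarrow>\<^sub>M count_space UNIV"
    by (cases "k < n") (auto intro: meas_coord_Xp)
qed

lemma cont_prefix_concat: "continuous_map Xp_top Xp_top (prefix_concat n a)"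
  unfolding prefix_concat_def by (intro cont_into_Xp) (auto intro: cont_coord_Xp)

lemma cont_upd: "continuous_map Xp_top Xp_top (\<lambda>x. x(m:=\<tau>))"
  by (intro cont_into_Xp) (auto intro: cont_coord_Xp)

lemma tail_sub: "sets (tail_algebra n) \<subseteq> sets (Xp :: (nat \<Rightarrow> 'e) measure)"
  unfolding tail_algebra_def
  by (rule sets_image_in_sets) (auto simp: Xp_def intro: measurable_restrict_subset)

lemma space_tail[simp]: "space (tail_algebra n) = UNIV"
  unfolding tail_algebra_def by simp

lemma tail_meas:
  assumes q: "q \<in> borel_measurable (Xp :: (nat \<Rightarrow> 'e) measure)"
    and inv: "\<And>x. q (prefix_concat n a0 x) = q x"
  shows "q \<in> borel_measurable (tail_algebra n)"
proof -
  define ext :: "(nat \<Rightarrow> 'e) \<Rightarrow> nat \<Rightarrow> 'e" where "ext y = (\<lambda>k. if k < n then a0 k else y k)" for y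
  have e: "ext (restrict x {n..}) = prefix_concat n a0 x" for x
    by (auto simp: ext_def prefix_concat_def)
  have m1: "ext \<in> measurable (PiM {n..} (\<lambda>_. count_space UNIV)) Xp"
    unfolding ext_def
  proof (intro meas_into_Xp)
    fix k
    show "(\<lambda>w. if k < n then a0 k else w k) \<in> PiM {n..} (\<lambda>_. count_space UNIV) \<rightarrow>\<^sub>M count_space UNIV"
      by (cases "k < n") (auto intro!: measurable_component_singleton)
  qed
  have "(\<lambda>x. (q \<circ> ext) (restrict x {n..})) \<in> borel_measurable (tail_algebra n)"
  proof -
    have "(\<lambda>x. restrict x {n..}) \<in> measurable (tail_algebra n) (PiM {n..} (\<lambda>_. count_space UNIV))"
      unfolding tail_algebra_def by (rule measurable_vimage_algebra1) (auto simp: space_PiM)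
    from measurable_comp[OF this measurable_comp[OF m1 q]] show ?thesis by (simp add: o_def)
  qed
  then show ?thesis by (simp add: e inv)
qed

definition Zf :: "((nat \<Rightarrow> 'e::finite) \<Rightarrow> real) \<Rightarrow> nat \<Rightarrow> (nat \<Rightarrow> 'e) \<Rightarrow> (nat \<Rightarrow> 'e) \<Rightarrow> real" where
  "Zf \<phi> n a x = exp (birkhoff_sum \<phi> n (prefix_concat n a x)) /
          (\<Sum>a'\<in>PiE {..<n} (\<lambda>_. UNIV). exp (birkhoff_sum \<phi> n (prefix_concat n a' x)))"

lemma Zf_denom_pos: "0 < (\<Sum>a'\<in>PiE {..<n} (\<lambda>_. UNIV::'e::finite set). exp (birkhoff_sum \<phi> n (prefix_concat n a' x)))"
proof (rule sum_pos)
  show "finite (PiE {..<n} (\<lambda>_. UNIV::'e set))" by (simp add: finite_PiE)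
  show "PiE {..<n} (\<lambda>_. UNIV::'e set) \<noteq> {}" by (simp add: PiE_eq_empty_iff)
qed auto

lemma Zf_bounds: "0 \<le> Zf \<phi> n a x"
  unfolding Zf_def using Zf_denom_pos[where n=n and \<phi>=\<phi> and x=x] by auto

lemma cont_Zf:
  assumes phi: "continuous_map Xp_top euclideanreal \<phi>"
  shows "continuous_map Xp_top euclideanreal (Zf \<phi> n a)"
  unfolding Zf_def[abs_def]
proof (rule continuous_map_real_divide)
  have c: "continuous_map Xp_top euclideanreal (\<lambda>x. exp (birkhoff_sum \<phi> n (prefix_concat n b x)))" for b
    by (intro cont_exp_comp cont_birkhoff[OF phi] cont_prefix_concat)
  then show "continuous_map Xp_top euclideanreal (\<lambda>x. exp (birkhoff_sum \<phi> n (prefix_concat n a x)))" .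
  show "continuous_map Xp_top euclideanreal (\<lambda>x. \<Sum>a'\<in>PiE {..<n} (\<lambda>_. UNIV). exp (birkhoff_sum \<phi> n (prefix_concat n a' x)))"
    by (intro continuous_map_sum c) (simp add: finite_PiE)
  show "\<And>x. x \<in> topspace Xp_top \<Longrightarrow> (\<Sum>a'\<in>PiE {..<n} (\<lambda>_. UNIV). exp (birkhoff_sum \<phi> n (prefix_concat n a' x))) \<noteq> 0"
    using Zf_denom_pos by (metis less_irrefl)
qed

lemma cyl_Xp: "{y. \<forall>i<n. y i = a i} \<in> sets (Xp :: (nat \<Rightarrow> 'e::finite) measure)"
proof -
  have "{y. \<forall>i<n. y i = a i} = {y. \<forall>i\<in>{..<n}. y i \<in> {a i}}" by auto
  moreover have "{y. \<forall>i\<in>{..<n}. y i \<in> {a i}} \<in> sets (PiM UNIV (\<lambda>_::nat. count_space (UNIV::'e set)))"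
    by (rule cyl_sets) simp
  ultimately show ?thesis unfolding Xp_def by simp
qed

lemma ce_int:
  assumes hg: "half_line_gibbs \<phi> \<nu>" and n: "n \<ge> 1"
    and phi: "continuous_map Xp_top euclideanreal \<phi>"
    and h: "h \<in> borel_measurable (tail_algebra n)" "\<And>x. \<bar>h x\<bar> \<le> B"
  shows "(\<integral>x. h x * indicator {y. \<forall>i<n. y i = a i} x \<partial>\<nu>) = (\<integral>x. h x * Zf \<phi> n a x \<partial>\<nu>)"
proof -
  have prob: "prob_space \<nu>" and sets: "sets \<nu> = sets Xp" using hg unfolding half_line_gibbs_def by auto
  interpret prob_space \<nu> by (rule prob)
  have sp: "space \<nu> = UNIV" using sets_eq_imp_space_eq[OF sets] by simp
  let ?T = "tail_algebra n"
  let ?F = "restr_to_subalg \<nu> ?T"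
  let ?C = "{y. \<forall>i<n. y i = a i}"
  have subT: "subalgebra \<nu> ?T" unfolding subalgebra_def using tail_sub sets sp by auto
  have subF: "subalgebra \<nu> ?F" unfolding subalgebra_def
    using sets_restr_to_subalg[OF subT] space_restr_to_subalg[of \<nu> ?T] subT
    unfolding subalgebra_def by auto
  interpret fms: finite_measure_subalgebra \<nu> ?F
    by unfold_locales (rule subF)
  have sF: "sets ?F = sets ?T" by (rule sets_restr_to_subalg[OF subT])
  have hF: "h \<in> borel_measurable ?F"
    by (subst measurable_cong_sets[OF sF refl]) (rule h(1))
  have hM: "h \<in> borel_measurable \<nu>"
    by (rule measurable_from_subalg[OF subT h(1)])
  have CM: "?C \<in> sets \<nu>" unfolding sets by (rule cyl_Xp)
  have iM: "indicator ?C \<in> borel_measurable \<nu>" using CM by simp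
  have ZM: "Zf \<phi> n a \<in> borel_measurable \<nu>"
    by (subst measurable_cong_sets[OF sets refl]) (rule cont_meas_Xp[OF cont_Zf[OF phi]])
  have int: "integrable \<nu> (\<lambda>x. h x * indicator ?C x)"
  proof (rule integrable_const_bound[where B=B])
    show "AE x in \<nu>. norm (h x * indicator ?C x) \<le> B"
    proof (rule AE_I2)
      fix x
      have "norm (h x * indicator ?C x) \<le> \<bar>h x\<bar>" by (simp add: indicator_def)
      then show "norm (h x * indicator ?C x) \<le> B" using h(2)[of x] by linarith
    qed
    show "(\<lambda>x. h x * indicator ?C x) \<in> borel_measurable \<nu>" by (intro borel_measurable_times hM iM)
  qed
  have "(\<integral>x. h x * indicator ?C x \<partial>\<nu>) = (\<integral>x. h x * real_cond_exp \<nu> ?F (indicator ?C) x \<partial>\<nu>)"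
    using fms.real_cond_exp_intg(2)[OF int hF iM] by simp
  also have "\<dots> = (\<integral>x. h x * Zf \<phi> n a x \<partial>\<nu>)"
  proof (rule integral_cong_AE)
    show "(\<lambda>x. h x * real_cond_exp \<nu> ?F (indicator ?C) x) \<in> borel_measurable \<nu>"
      by (intro borel_measurable_times hM borel_measurable_cond_exp2)
    show "(\<lambda>x. h x * Zf \<phi> n a x) \<in> borel_measurable \<nu>" by (intro borel_measurable_times hM ZM)
    have "\<forall>n\<ge>1. \<forall>a. AE x in \<nu>.
        real_cond_exp \<nu> (restr_to_subalg \<nu> (tail_algebra n)) (indicator {y. \<forall>i<n. y i = a i}) x
        = Zf \<phi> n a x"
      using hg unfolding half_line_gibbs_def Zf_def by (elim conjE)
    then have "AE x in \<nu>. real_cond_exp \<nu> ?F (indicator ?C) x = Zf \<phi> n a x"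
      using n by simp
    then show "AE x in \<nu>. h x * real_cond_exp \<nu> ?F (indicator ?C) x = h x * Zf \<phi> n a x"
      by eventually_elim simp
  qed
  finally show ?thesis .
qed

lemma bnd_int:
  assumes "finite_measure M" "f \<in> borel_measurable M" "\<And>x. \<bar>f x\<bar> \<le> (B::real)"
  shows "integrable M f"
proof -
  interpret finite_measure M by (rule assms(1))
  show ?thesis by (rule integrable_const_bound[where B=B]) (use assms in auto)
qed

definition Kf :: "((nat \<Rightarrow> 'e::finite) \<Rightarrow> real) \<Rightarrow> nat \<Rightarrow> 'e \<Rightarrow> (nat \<Rightarrow> 'e) \<Rightarrow> real" where
  "Kf \<phi> m \<sigma> x = exp (birkhoff_sum \<phi> (Suc m) (x(m:=\<sigma>))) /
      (\<Sum>\<tau>\<in>UNIV. exp (birkhoff_sum \<phi> (Suc m) (x(m:=\<tau>))))"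

lemma Kf_bounds: "0 \<le> Kf \<phi> m \<sigma> x" "Kf \<phi> m \<sigma> x \<le> 1"
proof -
  define S where "S \<tau> = birkhoff_sum \<phi> (Suc m) (x(m:=\<tau>))" for \<tau>
  have le: "exp (S \<sigma>) \<le> (\<Sum>\<tau>\<in>UNIV. exp (S \<tau>))" by (rule member_le_sum) auto
  have pos: "0 < (\<Sum>\<tau>\<in>UNIV. exp (S \<tau>))" by (rule sum_pos) auto
  have "Kf \<phi> m \<sigma> x = exp (S \<sigma>) / (\<Sum>\<tau>\<in>UNIV. exp (S \<tau>))" unfolding Kf_def S_def ..
  then show "0 \<le> Kf \<phi> m \<sigma> x" "Kf \<phi> m \<sigma> x \<le> 1" using le pos by auto
qed

lemma cont_Kf:
  assumes phi: "continuous_map Xp_top euclideanreal \<phi>"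
  shows "continuous_map Xp_top euclideanreal (Kf \<phi> m \<sigma>)"
  unfolding Kf_def[abs_def]
proof (rule continuous_map_real_divide)
  have c: "continuous_map Xp_top euclideanreal (\<lambda>x. exp (birkhoff_sum \<phi> (Suc m) (x(m:=\<tau>))))" for \<tau>
    by (intro cont_exp_comp cont_birkhoff[OF phi] cont_upd)
  then show "continuous_map Xp_top euclideanreal (\<lambda>x. exp (birkhoff_sum \<phi> (Suc m) (x(m:=\<sigma>))))" .
  show "continuous_map Xp_top euclideanreal (\<lambda>x. \<Sum>\<tau>\<in>UNIV. exp (birkhoff_sum \<phi> (Suc m) (x(m:=\<tau>))))"
    by (intro continuous_map_sum c) simp
  show "(\<Sum>\<tau>\<in>UNIV. exp (birkhoff_sum \<phi> (Suc m) (x(m:=\<tau>)))) \<noteq> 0" for x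
    using sum_pos[of UNIV "\<lambda>\<tau>. exp (birkhoff_sum \<phi> (Suc m) (x(m:=\<tau>)))"] by auto
qed

lemma cyl_iff_restrict:
  assumes "a \<in> PiE {..<n} (\<lambda>_. UNIV)"
  shows "(\<forall>i<n. x i = a i) \<longleftrightarrow> a = restrict x {..<n}"
proof
  assume h: "\<forall>i<n. x i = a i"
  show "a = restrict x {..<n}"
  proof
    fix k show "a k = restrict x {..<n} k"
      using h assms by (cases "k < n") (auto simp: PiE_def extensional_def)
  qed
qed auto

lemma sum_cyl:
  fixes f :: "(nat \<Rightarrow> 'e::finite) \<Rightarrow> real"
  shows "(\<Sum>a\<in>PiE {..<n} (\<lambda>_. UNIV). f a * indicator {y. \<forall>i<n. y i = a i} x) = (f (restrict x {..<n}) :: real)"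
proof -
  have "(\<Sum>a\<in>PiE {..<n} (\<lambda>_. UNIV). f a * indicator {y. \<forall>i<n. y i = a i} x)
      = (\<Sum>a\<in>PiE {..<n} (\<lambda>_. UNIV). if restrict x {..<n} = a then f a else 0)"
    by (rule sum.cong) (auto simp: indicator_def cyl_iff_restrict)
  also have "\<dots> = f (restrict x {..<n})"
    by (subst sum.delta') (auto intro!: finite_PiE)
  finally show ?thesis .
qed

lemma prefix_restrict[simp]: "prefix_concat n (restrict x {..<n}) x = x"
  by (auto simp: prefix_concat_def)

lemma fiber_sum:
  fixes f :: "(nat \<Rightarrow> 'e::finite) \<Rightarrow> real"
  assumes "m < n"
  shows "(\<Sum>a\<in>PiE {..<n} (\<lambda>_. UNIV::'e set). f a)
       = (\<Sum>a\<in>PiE {..<n} (\<lambda>_. UNIV::'e set). if a m = \<sigma> then (\<Sum>\<tau>\<in>UNIV. f (a(m:=\<tau>))) else 0)"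
proof -
  let ?P = "PiE {..<n} (\<lambda>_. UNIV::'e set)"
  let ?Q = "{a\<in>?P. a m = \<sigma>}"
  have finP: "finite ?P" by (simp add: finite_PiE)
  have upd: "a(m:=\<tau>) \<in> ?P" if "a \<in> ?P" for a \<tau>
    using that assms by (auto simp: PiE_def extensional_def Pi_def)
  have bij: "bij_betw (\<lambda>(a,\<tau>). a(m:=\<tau>)) (?Q \<times> UNIV) ?P"
  proof (rule bij_betw_imageI)
    show "inj_on (\<lambda>(a,\<tau>). a(m:=\<tau>)) (?Q \<times> UNIV)"
    proof (rule inj_onI)
      fix z z' assume z: "z \<in> ?Q \<times> UNIV" and z': "z' \<in> ?Q \<times> UNIV"
        and e0: "(\<lambda>(a,\<tau>). a(m:=\<tau>)) z = (\<lambda>(a,\<tau>). a(m:=\<tau>)) z'"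
      obtain a \<tau> where za: "z = (a, \<tau>)" by (cases z)
      obtain b \<tau>' where zb: "z' = (b, \<tau>')" by (cases z')
      have a: "a m = \<sigma>" and b: "b m = \<sigma>" using z z' za zb by auto
      have e: "a(m:=\<tau>) = b(m:=\<tau>')" using e0 za zb by simp
      have "\<tau> = \<tau>'" using fun_cong[OF e, of m] by simp
      moreover have "a = b"
      proof
        fix k show "a k = b k" using fun_cong[OF e, of k] a b by (cases "k = m") auto
      qed
      ultimately show "z = z'" using za zb by simp
    qed
    show "(\<lambda>(a,\<tau>). a(m:=\<tau>)) ` (?Q \<times> UNIV) = ?P"
    proof
      show "(\<lambda>(a,\<tau>). a(m:=\<tau>)) ` (?Q \<times> UNIV) \<subseteq> ?P" using upd by auto
      show "?P \<subseteq> (\<lambda>(a,\<tau>). a(m:=\<tau>)) ` (?Q \<times> UNIV)"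
      proof
        fix b assume "b \<in> ?P"
        then have "(b(m:=\<sigma>), b m) \<in> ?Q \<times> UNIV" using upd by auto
        moreover have "b = (\<lambda>(a,\<tau>). a(m:=\<tau>)) (b(m:=\<sigma>), b m)" by simp
        ultimately show "b \<in> (\<lambda>(a,\<tau>). a(m:=\<tau>)) ` (?Q \<times> UNIV)" by blast
      qed
    qed
  qed
  have "(\<Sum>a\<in>?P. f a) = (\<Sum>z\<in>?Q \<times> UNIV. f ((\<lambda>(a,\<tau>). a(m:=\<tau>)) z))"
    by (rule sum.reindex_bij_betw[OF bij, symmetric])
  also have "\<dots> = (\<Sum>a\<in>?Q. \<Sum>\<tau>\<in>UNIV. f (a(m:=\<tau>)))"
    by (subst sum.cartesian_product) (simp add: case_prod_beta)
  also have "\<dots> = (\<Sum>a\<in>?P. if a m = \<sigma> then (\<Sum>\<tau>\<in>UNIV. f (a(m:=\<tau>))) else 0)"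
    by (rule sum.inter_filter[OF finP])
  finally show ?thesis .
qed

lemma pw_identity:
  fixes g :: "(nat \<Rightarrow> 'e::finite) \<Rightarrow> real"
  assumes inv: "\<And>x \<tau>. g (x(m:=\<tau>)) = g x"
  shows "(\<Sum>a\<in>PiE {..<Suc m} (\<lambda>_. UNIV). (g (prefix_concat (Suc m) a x) * (if a m = \<sigma> then 1 else 0)) * Zf \<phi> (Suc m) a x)
       = (\<Sum>a\<in>PiE {..<Suc m} (\<lambda>_. UNIV). (g (prefix_concat (Suc m) a x) * Kf \<phi> m \<sigma> (prefix_concat (Suc m) a x)) * Zf \<phi> (Suc m) a x)"
proof -
  define n where "n = Suc m"
  have mn: "m < n" unfolding n_def by simp
  define E where "E a = exp (birkhoff_sum \<phi> n (prefix_concat n a x))" for a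
  define N where "N = (\<Sum>a'\<in>PiE {..<n} (\<lambda>_. UNIV::'e set). E a')"
  have Npos: "N > 0" unfolding N_def E_def by (rule Zf_denom_pos)
  have Zeq: "Zf \<phi> n a x = E a / N" for a unfolding Zf_def E_def N_def ..
  have pupd: "(prefix_concat n a x)(m:=\<tau>) = prefix_concat n (a(m:=\<tau>)) x" for a \<tau>
    using mn by (auto simp: prefix_concat_def)
  have Keq: "Kf \<phi> m \<sigma> (prefix_concat n a x) = E (a(m:=\<sigma>)) / (\<Sum>\<tau>\<in>UNIV. E (a(m:=\<tau>)))" for a
    unfolding Kf_def E_def using pupd unfolding n_def by simp
  have Geq: "g (prefix_concat n (a(m:=\<tau>)) x) = g (prefix_concat n a x)" for a \<tau>
    using inv[of "prefix_concat n a x" \<tau>] pupd[of a \<tau>] by simp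
  have Dpos: "(\<Sum>\<tau>\<in>UNIV. E (a(m:=\<tau>))) > 0" for a
    unfolding E_def by (rule sum_pos) auto
  have inner: "(\<Sum>\<tau>\<in>UNIV. (g (prefix_concat n (a(m:=\<tau>)) x) * Kf \<phi> m \<sigma> (prefix_concat n (a(m:=\<tau>)) x)) * Zf \<phi> n (a(m:=\<tau>)) x)
      = g (prefix_concat n a x) * E a / N" if am: "a m = \<sigma>" for a
  proof -
    let ?D = "(\<Sum>\<tau>\<in>UNIV. E (a(m:=\<tau>)))"
    have "(\<Sum>\<tau>\<in>UNIV. (g (prefix_concat n (a(m:=\<tau>)) x) * Kf \<phi> m \<sigma> (prefix_concat n (a(m:=\<tau>)) x)) * Zf \<phi> n (a(m:=\<tau>)) x)
        = (\<Sum>\<tau>\<in>UNIV. (g (prefix_concat n a x) * E a / ?D / N) * E (a(m:=\<tau>)))"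
    proof -
      have aa: "a(m:=\<sigma>) = a" using am by auto
      show ?thesis by (intro sum.cong refl) (simp add: Geq Keq Zeq aa)
    qed
    also have "\<dots> = (g (prefix_concat n a x) * E a / ?D / N) * ?D"
      by (simp add: sum_distrib_left)
    also have "\<dots> = g (prefix_concat n a x) * E a / N"
      using Dpos[of a] by simp
    finally show ?thesis .
  qed
  have "(\<Sum>a\<in>PiE {..<n} (\<lambda>_. UNIV). (g (prefix_concat n a x) * Kf \<phi> m \<sigma> (prefix_concat n a x)) * Zf \<phi> n a x)
      = (\<Sum>a\<in>PiE {..<n} (\<lambda>_. UNIV). if a m = \<sigma> then (\<Sum>\<tau>\<in>UNIV. (g (prefix_concat n (a(m:=\<tau>)) x) * Kf \<phi> m \<sigma> (prefix_concat n (a(m:=\<tau>)) x)) * Zf \<phi> n (a(m:=\<tau>)) x) else 0)"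
    by (rule fiber_sum[OF mn])
  also have "\<dots> = (\<Sum>a\<in>PiE {..<n} (\<lambda>_. UNIV). if a m = \<sigma> then g (prefix_concat n a x) * E a / N else 0)"
    by (intro sum.cong refl) (simp add: inner)
  also have "\<dots> = (\<Sum>a\<in>PiE {..<n} (\<lambda>_. UNIV). (g (prefix_concat n a x) * (if a m = \<sigma> then 1 else 0)) * Zf \<phi> n a x)"
    by (intro sum.cong refl) (simp add: Zeq)
  finally show ?thesis unfolding n_def by simp
qed

lemma Zf_le1: "Zf \<phi> n a x \<le> 1"
proof -
  let ?P = "PiE {..<n} (\<lambda>_. UNIV::'a set)"
  have ra: "restrict a {..<n} \<in> ?P" by (simp only: restrict_PiE_iff) simp
  have pc: "prefix_concat n a x = prefix_concat n (restrict a {..<n}) x"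
    by (auto simp: prefix_concat_def)
  have "exp (birkhoff_sum \<phi> n (prefix_concat n a x)) \<le> (\<Sum>a'\<in>?P. exp (birkhoff_sum \<phi> n (prefix_concat n a' x)))"
    unfolding pc by (rule member_le_sum[OF ra]) (auto intro!: finite_PiE)
  then show ?thesis unfolding Zf_def using Zf_denom_pos[where n=n and \<phi>=\<phi> and x=x] by auto
qed

lemma half_line_single:
  fixes g :: "(nat \<Rightarrow> 'e::finite) \<Rightarrow> real"
  assumes hg: "half_line_gibbs \<phi> \<nu>" and phi: "continuous_map Xp_top euclideanreal \<phi>"
    and g: "g \<in> borel_measurable Xp" "\<And>x. \<bar>g x\<bar> \<le> B" "\<And>x \<tau>. g (x(m:=\<tau>)) = g x"
  shows "(\<integral>x. g x * indicator {x. x m = \<sigma>} x \<partial>\<nu>) = (\<integral>x. g x * Kf \<phi> m \<sigma> x \<partial>\<nu>)"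
proof -
  have prob: "prob_space \<nu>" and sets: "sets \<nu> = sets Xp" using hg unfolding half_line_gibbs_def by auto
  interpret prob_space \<nu> by (rule prob)
  have fm: "finite_measure \<nu>" by unfold_locales
  have toN: "f \<in> borel_measurable \<nu>" if "f \<in> borel_measurable Xp" for f :: "_ \<Rightarrow> real"
    by (subst measurable_cong_sets[OF sets refl]) (rule that)
  define n where "n = Suc m"
  have mn: "m < n" and n1: "n \<ge> 1" unfolding n_def by auto
  let ?P = "PiE {..<n} (\<lambda>_. UNIV::'e set)"
  have finP: "finite ?P" by (auto intro!: finite_PiE)
  let ?C = "\<lambda>a. {y. \<forall>i<n. y i = a i}"
  define L where "L a x = g (prefix_concat n a x) * (if a m = \<sigma> then 1 else 0)" for a :: "nat \<Rightarrow> 'e" and x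
  define q where "q a x = g (prefix_concat n a x) * Kf \<phi> m \<sigma> (prefix_concat n a x)" for a :: "nat \<Rightarrow> 'e" and x
  have B0: "B \<ge> 0" using g(2)[of undefined] by linarith
  have gpM: "(\<lambda>x. g (prefix_concat n a x)) \<in> borel_measurable Xp" for a :: "nat \<Rightarrow> 'e"
    using measurable_comp[OF meas_prefix_concat g(1)] by (simp add: o_def)
  have KM: "Kf \<phi> m \<sigma> \<in> borel_measurable Xp" by (rule cont_meas_Xp[OF cont_Kf[OF phi]])
  have KpM: "(\<lambda>x. Kf \<phi> m \<sigma> (prefix_concat n a x)) \<in> borel_measurable Xp" for a :: "nat \<Rightarrow> 'e"
    using measurable_comp[OF meas_prefix_concat KM] by (simp add: o_def)
  have ZM: "Zf \<phi> n a \<in> borel_measurable Xp" for a :: "nat \<Rightarrow> 'e" by (rule cont_meas_Xp[OF cont_Zf[OF phi]])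
  have LM: "L a \<in> borel_measurable Xp" for a unfolding L_def[abs_def] by (rule borel_measurable_times[OF gpM borel_measurable_const])
  have qM: "q a \<in> borel_measurable Xp" for a unfolding q_def[abs_def] by (rule borel_measurable_times[OF gpM KpM])
  have CM: "(indicator (?C a) :: _ \<Rightarrow> real) \<in> borel_measurable Xp" for a :: "nat \<Rightarrow> 'e" by (rule borel_measurable_indicator[OF cyl_Xp])
  have Lb: "\<bar>L a x\<bar> \<le> B" for a :: "nat \<Rightarrow> 'e" and x unfolding L_def using g(2) B0 by (auto simp: abs_mult)
  have qb: "\<bar>q a x\<bar> \<le> B" for a :: "nat \<Rightarrow> 'e" and x
  proof -
    have "\<bar>q a x\<bar> = \<bar>g (prefix_concat n a x)\<bar> * Kf \<phi> m \<sigma> (prefix_concat n a x)"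
      unfolding q_def using Kf_bounds(1)[of \<phi> m \<sigma> "prefix_concat n a x"] by (simp add: abs_mult)
    also have "\<dots> \<le> \<bar>g (prefix_concat n a x)\<bar> * 1"
      using Kf_bounds(2)[of \<phi> m \<sigma> "prefix_concat n a x"] by (intro mult_left_mono) auto
    finally show ?thesis using g(2)[of "prefix_concat n a x"] by simp
  qed
  have Zb: "\<bar>Zf \<phi> n a x\<bar> \<le> 1" for a :: "nat \<Rightarrow> 'e" and x using Zf_bounds[of \<phi> n a x] Zf_le1[of \<phi> n a x] by simp
  have indb: "\<bar>indicator S x :: real\<bar> \<le> 1" for S x by (simp add: indicator_def)
  have prodb: "\<bar>u * v\<bar> \<le> B" if "\<bar>u\<bar> \<le> B" "\<bar>v\<bar> \<le> 1" for u v :: real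
  proof -
    have "\<bar>u * v\<bar> = \<bar>u\<bar> * \<bar>v\<bar>" by (simp add: abs_mult)
    also have "\<dots> \<le> B * 1" using that by (intro mult_mono) auto
    finally show ?thesis by simp
  qed
  have intLC: "integrable \<nu> (\<lambda>x. L a x * indicator (?C a) x)" for a :: "nat \<Rightarrow> 'e"
  proof (rule bnd_int[OF fm toN, where B=B])
    show "(\<lambda>x. L a x * indicator (?C a) x) \<in> borel_measurable Xp" by (rule borel_measurable_times[OF LM CM])
    show "\<bar>L a x * indicator (?C a) x\<bar> \<le> B" for x by (rule prodb[OF Lb indb])
  qed
  have intqC: "integrable \<nu> (\<lambda>x. q a x * indicator (?C a) x)" for a :: "nat \<Rightarrow> 'e"
  proof (rule bnd_int[OF fm toN, where B=B])
    show "(\<lambda>x. q a x * indicator (?C a) x) \<in> borel_measurable Xp" by (rule borel_measurable_times[OF qM CM])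
    show "\<bar>q a x * indicator (?C a) x\<bar> \<le> B" for x by (rule prodb[OF qb indb])
  qed
  have intLZ: "integrable \<nu> (\<lambda>x. L a x * Zf \<phi> n a x)" for a :: "nat \<Rightarrow> 'e"
  proof (rule bnd_int[OF fm toN, where B=B])
    show "(\<lambda>x. L a x * Zf \<phi> n a x) \<in> borel_measurable Xp" by (rule borel_measurable_times[OF LM ZM])
    show "\<bar>L a x * Zf \<phi> n a x\<bar> \<le> B" for x by (rule prodb[OF Lb Zb])
  qed
  have intqZ: "integrable \<nu> (\<lambda>x. q a x * Zf \<phi> n a x)" for a :: "nat \<Rightarrow> 'e"
  proof (rule bnd_int[OF fm toN, where B=B])
    show "(\<lambda>x. q a x * Zf \<phi> n a x) \<in> borel_measurable Xp" by (rule borel_measurable_times[OF qM ZM])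
    show "\<bar>q a x * Zf \<phi> n a x\<bar> \<le> B" for x by (rule prodb[OF qb Zb])
  qed
  have Ltail: "L a \<in> borel_measurable (tail_algebra n)" for a :: "nat \<Rightarrow> 'e"
    by (rule tail_meas[OF LM, of a]) (simp add: L_def)
  have qtail: "q a \<in> borel_measurable (tail_algebra n)" for a :: "nat \<Rightarrow> 'e"
    by (rule tail_meas[OF qM, of a]) (simp add: q_def)
  have "(\<integral>x. g x * indicator {x. x m = \<sigma>} x \<partial>\<nu>) = (\<integral>x. (\<Sum>a\<in>?P. L a x * indicator (?C a) x) \<partial>\<nu>)"
  proof (rule Bochner_Integration.integral_cong[OF refl])
    fix x
    have "(\<Sum>a\<in>?P. L a x * indicator (?C a) x) = L (restrict x {..<n}) x" by (rule sum_cyl)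
    also have "\<dots> = g x * indicator {x. x m = \<sigma>} x" using mn by (simp add: L_def indicator_def)
    finally show "g x * indicator {x. x m = \<sigma>} x = (\<Sum>a\<in>?P. L a x * indicator (?C a) x)" by simp
  qed
  also have "\<dots> = (\<Sum>a\<in>?P. (\<integral>x. L a x * indicator (?C a) x \<partial>\<nu>))"
    by (rule Bochner_Integration.integral_sum) (rule intLC)
  also have "\<dots> = (\<Sum>a\<in>?P. (\<integral>x. L a x * Zf \<phi> n a x \<partial>\<nu>))"
    by (intro sum.cong refl ce_int[OF hg n1 phi Ltail Lb])
  also have "\<dots> = (\<integral>x. (\<Sum>a\<in>?P. L a x * Zf \<phi> n a x) \<partial>\<nu>)"
    by (rule Bochner_Integration.integral_sum[symmetric]) (rule intLZ)
  also have "\<dots> = (\<integral>x. (\<Sum>a\<in>?P. q a x * Zf \<phi> n a x) \<partial>\<nu>)"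
    unfolding L_def q_def n_def by (rule Bochner_Integration.integral_cong[OF refl]) (rule pw_identity[OF g(3)])
  also have "\<dots> = (\<Sum>a\<in>?P. (\<integral>x. q a x * Zf \<phi> n a x \<partial>\<nu>))"
    by (rule Bochner_Integration.integral_sum) (rule intqZ)
  also have "\<dots> = (\<Sum>a\<in>?P. (\<integral>x. q a x * indicator (?C a) x \<partial>\<nu>))"
    by (intro sum.cong refl ce_int[OF hg n1 phi qtail qb, symmetric])
  also have "\<dots> = (\<integral>x. (\<Sum>a\<in>?P. q a x * indicator (?C a) x) \<partial>\<nu>)"
    by (rule Bochner_Integration.integral_sum[symmetric]) (rule intqC)
  also have "\<dots> = (\<integral>x. g x * Kf \<phi> m \<sigma> x \<partial>\<nu>)"
  proof (rule Bochner_Integration.integral_cong[OF refl])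
    fix x
    have "(\<Sum>a\<in>?P. q a x * indicator (?C a) x) = q (restrict x {..<n}) x" by (rule sum_cyl)
    also have "\<dots> = g x * Kf \<phi> m \<sigma> x" by (simp add: q_def)
    finally show "(\<Sum>a\<in>?P. q a x * indicator (?C a) x) = g x * Kf \<phi> m \<sigma> x" .
  qed
  finally show ?thesis .
qed

lemma coord_meas_gen: "sets M = sets (Xp :: (nat \<Rightarrow> 'e) measure) \<Longrightarrow> (\<lambda>x. x k) \<in> measurable M (count_space UNIV)"
  using meas_coord_Xp[of k] measurable_cong_sets[of M Xp "count_space (UNIV::'e set)" "count_space (UNIV::'e set)"] by simp

lemma sets_rho: "sets (rho :: (nat \<Rightarrow> 'e::finite) measure) = sets Xp"
  unfolding rho_def Xp_def by (rule sets_PiM_cong) (auto simp: sets_uniform_count_measure)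

lemma prob_rho: "prob_space (rho :: (nat \<Rightarrow> 'e::finite) measure)"
  unfolding rho_def by (rule prob_space_PiM) (rule prob_space_uniform_count_measure, auto)

lemma glue_meas:
  assumes "sets \<nu> = sets (Xp :: (nat \<Rightarrow> 'e::finite) measure)"
  shows "glue \<in> measurable (rho \<Otimes>\<^sub>M \<nu>) Xz"
proof (rule meas_into_Xz)
  fix t :: int
  show "(\<lambda>z. glue z t) \<in> measurable (rho \<Otimes>\<^sub>M \<nu>) (count_space UNIV)"
  proof (cases "t < 0")
    case True
    have "(\<lambda>z. fst z (nat (- t - 1))) \<in> measurable (rho \<Otimes>\<^sub>M \<nu>) (count_space UNIV)"
      using measurable_comp[OF measurable_fst coord_meas_gen[OF sets_rho]] by (simp add: o_def)
    then show ?thesis using True by (simp add: glue_def case_prod_beta)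
  next
    case False
    have "(\<lambda>z. snd z (nat t)) \<in> measurable (rho \<Otimes>\<^sub>M \<nu>) (count_space UNIV)"
      using measurable_comp[OF measurable_snd coord_meas_gen[OF assms]] by (simp add: o_def)
    then show ?thesis using False by (simp add: glue_def case_prod_beta)
  qed
qed

lemma mu0_props:
  assumes "prob_space \<nu>" "sets \<nu> = sets (Xp :: (nat \<Rightarrow> 'e::finite) measure)"
  shows "prob_space (mu0 \<nu>)" "sets (mu0 \<nu>) = sets Xz"
proof -
  interpret pr: prob_space "rho \<Otimes>\<^sub>M \<nu>" by (rule prob_space_pair[OF prob_rho assms(1)])
  show "prob_space (mu0 \<nu>)" unfolding mu0_def by (rule pr.prob_space_distr[OF glue_meas[OF assms(2)]])
  show "sets (mu0 \<nu>) = sets Xz" unfolding mu0_def by simp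
qed

lemma mui_props:
  assumes "prob_space \<mu>0" "sets \<mu>0 = sets (Xz :: (int \<Rightarrow> 'e) measure)"
  shows "prob_space (distr \<mu>0 Xz (shiftz ^^ i))" "sets (distr \<mu>0 Xz (shiftz ^^ i)) = sets Xz"
proof -
  interpret prob_space \<mu>0 by (rule assms(1))
  have "(shiftz ^^ i) \<in> measurable \<mu>0 Xz"
    by (subst measurable_cong_sets[OF assms(2) refl]) (rule meas_shiftz_pow)
  then show "prob_space (distr \<mu>0 Xz (shiftz ^^ i))" by (rule prob_space_distr)
  show "sets (distr \<mu>0 Xz (shiftz ^^ i)) = sets Xz" by simp
qed

lemma snd_integral:
  fixes H :: "'b \<Rightarrow> real"
  assumes "prob_space R" "prob_space N" "H \<in> borel_measurable N"
  shows "(\<integral>z. H (snd z) \<partial>(R \<Otimes>\<^sub>M N)) = (\<integral>x. H x \<partial>N)"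
proof -
  interpret R: prob_space R by (rule assms(1))
  interpret N: prob_space N by (rule assms(2))
  have d: "distr (R \<Otimes>\<^sub>M N) N snd = N"
  proof (rule measure_eqI)
    fix A assume A: "A \<in> sets (distr (R \<Otimes>\<^sub>M N) N snd)"
    then have A': "A \<in> sets N" by simp
    have "emeasure (distr (R \<Otimes>\<^sub>M N) N snd) A = emeasure (R \<Otimes>\<^sub>M N) (space R \<times> A)"
      using A' by (auto simp add: emeasure_distr space_pair_measure dest: sets.sets_into_space intro!: arg_cong2[where f=emeasure])
    also have "\<dots> = emeasure R (space R) * emeasure N A"
      by (rule N.emeasure_pair_measure_Times) (auto simp: A')
    finally show "emeasure (distr (R \<Otimes>\<^sub>M N) N snd) A = emeasure N A" by (simp add: R.emeasure_space_1)
  qed simp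
  have "(\<integral>z. H (snd z) \<partial>(R \<Otimes>\<^sub>M N)) = (\<integral>x. H x \<partial>distr (R \<Otimes>\<^sub>M N) N snd)"
    by (rule integral_distr[symmetric]) (auto intro: assms(3))
  then show ?thesis using d by simp
qed

definition emb :: "nat \<Rightarrow> (nat \<Rightarrow> 'e) \<Rightarrow> int \<Rightarrow> 'e" where
  "emb i x = (\<lambda>t. x (nat (t + int i)))"

lemma reduce:
  fixes h :: "(int \<Rightarrow> 'e::finite) \<Rightarrow> real"
  assumes pn: "prob_space \<nu>" "sets \<nu> = sets (Xp :: (nat \<Rightarrow> 'e) measure)"
    and hM: "h \<in> borel_measurable Xz"
    and dep: "\<And>w w'. (\<And>t. t \<ge> - int i \<Longrightarrow> w t = w' t) \<Longrightarrow> h w = h w'"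
  shows "(\<integral>w. h w \<partial>distr (mu0 \<nu>) Xz (shiftz ^^ i)) = (\<integral>x. h (emb i x) \<partial>\<nu>)"
proof -
  have sm: "(shiftz ^^ i) \<in> measurable (mu0 \<nu>) Xz"
    by (subst measurable_cong_sets[OF mu0_props(2)[OF pn] refl]) (rule meas_shiftz_pow)
  have hS: "(\<lambda>w. h ((shiftz ^^ i) w)) \<in> borel_measurable Xz"
    using measurable_comp[OF meas_shiftz_pow hM] by (simp add: o_def)
  have embM: "emb i \<in> measurable \<nu> Xz"
    unfolding emb_def by (intro meas_into_Xz coord_meas_gen[OF pn(2)])
  have eq: "h ((shiftz ^^ i) (glue z)) = h (emb i (snd z))" for z
  proof (rule dep)
    fix t assume "t \<ge> - int i"
    then show "(shiftz ^^ i) (glue z) t = emb i (snd z) t"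
      by (simp add: shiftz_pow glue_def emb_def case_prod_beta)
  qed
  have "(\<integral>w. h w \<partial>distr (mu0 \<nu>) Xz (shiftz ^^ i)) = (\<integral>w. h ((shiftz ^^ i) w) \<partial>mu0 \<nu>)"
    by (rule integral_distr[OF sm hM])
  also have "\<dots> = (\<integral>z. h ((shiftz ^^ i) (glue z)) \<partial>(rho \<Otimes>\<^sub>M \<nu>))"
    unfolding mu0_def by (rule integral_distr[OF glue_meas[OF pn(2)] hS])
  also have "\<dots> = (\<integral>z. h (emb i (snd z)) \<partial>((rho :: (nat \<Rightarrow> 'e) measure) \<Otimes>\<^sub>M \<nu>))"
    by (intro Bochner_Integration.integral_cong refl) (rule eq)
  also have "\<dots> = (\<integral>x. h (emb i x) \<partial>\<nu>)"
    using measurable_comp[OF embM hM] by (intro snd_integral[OF prob_rho pn(1)]) (simp add: o_def)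
  finally show ?thesis .
qed

lemma cyl_Xz: "finite J \<Longrightarrow> {x. \<forall>t\<in>J. x t \<in> V t} \<in> sets (Xz :: (int \<Rightarrow> 'e::finite) measure)"
  unfolding Xz_def by (rule cyl_sets)

lemma exact_identity:
  fixes \<phi> :: "(nat \<Rightarrow> 'e::finite) \<Rightarrow> real"
  assumes hg: "half_line_gibbs \<phi> \<nu>" and phi: "continuous_map Xp_top euclideanreal \<phi>"
    and J: "finite J" "j \<notin> J"
    and i: "j + int i \<ge> 0" "\<And>t. t \<in> J \<Longrightarrow> t + int i \<ge> 0"
  shows "(\<integral>w. indicator {x. \<forall>t\<in>J. x t \<in> V t} w * indicator {w. w j = \<sigma>} w \<partial>distr (mu0 \<nu>) Xz (shiftz ^^ i))
       = (\<integral>w. indicator {x. \<forall>t\<in>J. x t \<in> V t} w * gp \<phi> j \<sigma> i w \<partial>distr (mu0 \<nu>) Xz (shiftz ^^ i))"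
proof -
  have pn: "prob_space \<nu>" "sets \<nu> = sets Xp" using hg unfolding half_line_gibbs_def by auto
  let ?A = "{x. \<forall>t\<in>J. x t \<in> V t}"
  define m where "m = nat (j + int i)"
  have mi: "int m = j + int i" using i(1) unfolding m_def by simp
  have AM: "(indicator ?A :: _ \<Rightarrow> real) \<in> borel_measurable Xz" by (rule borel_measurable_indicator[OF cyl_Xz[OF J(1)]])
  have sM: "(indicator {w. w j = \<sigma>} :: _ \<Rightarrow> real) \<in> borel_measurable (Xz :: (int \<Rightarrow> 'e) measure)"
  proof -
    have "{w. w j = \<sigma>} = {x. \<forall>t\<in>{j}. x t \<in> {\<sigma>}}" by auto
    then show ?thesis using borel_measurable_indicator[OF cyl_Xz[of "{j}" "\<lambda>_. {\<sigma>}"]] by simp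
  qed
  have gM: "gp \<phi> j \<sigma> i \<in> borel_measurable Xz" by (rule cont_meas_Xz[OF cont_gp[OF phi]])
  have depA: "indicator ?A w = (indicator ?A w' :: real)" if "\<And>t. t \<ge> - int i \<Longrightarrow> w t = w' t" for w w'
  proof -
    have "w t = w' t" if "t \<in> J" for t using that i(2)[OF that] \<open>\<And>t. t \<ge> - int i \<Longrightarrow> w t = w' t\<close> by auto
    then show ?thesis by (auto simp: indicator_def)
  qed
  have depj: "w j = w' j" if "\<And>t. t \<ge> - int i \<Longrightarrow> w t = w' t" for w w' :: "int \<Rightarrow> 'e"
    using that i(1) by auto
  have depg: "gp \<phi> j \<sigma> i w = gp \<phi> j \<sigma> i w'" if h: "\<And>t. t \<ge> - int i \<Longrightarrow> w t = w' t" for w w'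
  proof -
    have "window (w(j:=\<tau>)) i = window (w'(j:=\<tau>)) i" for \<tau>
      using h by (auto simp: window_def)
    then show ?thesis unfolding gp_def by simp
  qed
  have embM: "emb i \<in> measurable Xp Xz"
    unfolding emb_def by (intro meas_into_Xz meas_coord_Xp)
  have emb_j: "emb i x j = x m" for x :: "nat \<Rightarrow> 'e" unfolding emb_def m_def by simp
  have emb_gp: "gp \<phi> j \<sigma> i (emb i x) = Kf \<phi> m \<sigma> x" for x
  proof -
    have w: "window ((emb i x)(j:=\<tau>)) i = x(m:=\<tau>)" for \<tau>
    proof
      fix k
      show "window ((emb i x)(j:=\<tau>)) i k = (x(m:=\<tau>)) k"
        using mi by (auto simp: window_def emb_def)
    qed
    have n: "nat (j + int i + 1) = Suc m" using mi by simp
    show ?thesis unfolding gp_def Kf_def w n ..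
  qed
  define g where "g x = (indicator ?A (emb i x) :: real)" for x
  have gXp: "g \<in> borel_measurable Xp" unfolding g_def using measurable_comp[OF embM AM] by (simp add: o_def)
  have ginv: "g (x(m:=\<tau>)) = g x" for x \<tau>
  proof -
    have "emb i (x(m:=\<tau>)) t = emb i x t" if "t \<in> J" for t
    proof -
      have "t \<noteq> j" using that J(2) by auto
      then have "nat (t + int i) \<noteq> m" using i(2)[OF that] mi by auto
      then show ?thesis by (simp add: emb_def)
    qed
    then show ?thesis unfolding g_def by (auto simp: indicator_def)
  qed
  have gb: "\<bar>g x\<bar> \<le> 1" for x unfolding g_def by (simp add: indicator_def)
  have "(\<integral>w. indicator ?A w * indicator {w. w j = \<sigma>} w \<partial>distr (mu0 \<nu>) Xz (shiftz ^^ i))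
      = (\<integral>x. indicator ?A (emb i x) * indicator {w. w j = \<sigma>} (emb i x) \<partial>\<nu> :: real)"
  proof (rule reduce[OF pn, where h="\<lambda>w. indicator ?A w * indicator {w. w j = \<sigma>} w"])
    show "(\<lambda>w. indicator ?A w * indicator {w. w j = \<sigma>} w :: real) \<in> borel_measurable Xz"
      by (rule borel_measurable_times[OF AM sM])
    fix w w' :: "int \<Rightarrow> 'e" assume a: "\<And>t. t \<ge> - int i \<Longrightarrow> w t = w' t"
    have "indicator ?A w = (indicator ?A w' :: real)" by (rule depA[OF a])
    moreover have "w j = w' j" by (rule depj[OF a])
    ultimately show "indicator ?A w * indicator {w. w j = \<sigma>} w = (indicator ?A w' * indicator {w. w j = \<sigma>} w' :: real)"
      by (simp add: indicator_def)
  qed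
  also have "\<dots> = (\<integral>x. g x * indicator {x. x m = \<sigma>} x \<partial>\<nu>)"
    by (rule Bochner_Integration.integral_cong[OF refl]) (simp add: g_def indicator_def emb_j)
  also have "\<dots> = (\<integral>x. g x * Kf \<phi> m \<sigma> x \<partial>\<nu>)"
    by (rule half_line_single[OF hg phi gXp gb ginv])
  also have "\<dots> = (\<integral>x. indicator ?A (emb i x) * gp \<phi> j \<sigma> i (emb i x) \<partial>\<nu>)"
    by (rule Bochner_Integration.integral_cong[OF refl]) (simp add: g_def emb_gp)
  also have "\<dots> = (\<integral>w. indicator ?A w * gp \<phi> j \<sigma> i w \<partial>distr (mu0 \<nu>) Xz (shiftz ^^ i))"
  proof (rule reduce[OF pn, where h="\<lambda>w. indicator ?A w * gp \<phi> j \<sigma> i w", symmetric])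
    show "(\<lambda>w. indicator ?A w * gp \<phi> j \<sigma> i w :: real) \<in> borel_measurable Xz"
      by (rule borel_measurable_times[OF AM gM])
    fix w w' :: "int \<Rightarrow> 'e" assume a: "\<And>t. t \<ge> - int i \<Longrightarrow> w t = w' t"
    have "indicator ?A w = (indicator ?A w' :: real)" by (rule depA[OF a])
    moreover have "gp \<phi> j \<sigma> i w = gp \<phi> j \<sigma> i w'" by (rule depg[OF a])
    ultimately show "indicator ?A w * gp \<phi> j \<sigma> i w = indicator ?A w' * gp \<phi> j \<sigma> i w'"
      by simp
  qed
  finally show ?thesis .
qed

lemma cesaro0:
  fixes a :: "nat \<Rightarrow> real"
  assumes "a \<longlonglongrightarrow> 0"
  shows "(\<lambda>n. (1 / real n) * (\<Sum>i<n. a i)) \<longlonglongrightarrow> 0"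
proof (rule LIMSEQ_I)
  fix e :: real assume e: "e > 0"
  from LIMSEQ_D[OF assms, of "e/2"] e obtain N where N: "\<And>i. i \<ge> N \<Longrightarrow> \<bar>a i\<bar> < e/2" by auto
  define C where "C = (\<Sum>i<N. \<bar>a i\<bar>)"
  have C0: "C \<ge> 0" unfolding C_def by (simp add: sum_nonneg)
  obtain M :: nat where M: "M > 2 * C / e" using reals_Archimedean2 by blast
  show "\<exists>no. \<forall>n\<ge>no. norm ((1 / real n) * (\<Sum>i<n. a i) - 0) < e"
  proof (intro exI allI impI)
    fix n assume n: "n \<ge> N + M + 1"
    then have npos: "real n > 0" by simp
    have split: "(\<Sum>i<n. a i) = (\<Sum>i<N. a i) + (\<Sum>i\<in>{N..<n}. a i)"
      using sum.atLeastLessThan_concat[of 0 N n a] n by (simp add: atLeast0LessThan)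
    have b1: "\<bar>\<Sum>i<N. a i\<bar> \<le> C" unfolding C_def by (rule sum_abs)
    have "\<bar>\<Sum>i\<in>{N..<n}. a i\<bar> \<le> (\<Sum>i\<in>{N..<n}. \<bar>a i\<bar>)" by (rule sum_abs)
    also have "\<dots> \<le> (\<Sum>i\<in>{N..<n}. e/2)" using N by (intro sum_mono) (auto intro: less_imp_le)
    also have "\<dots> = real (n - N) * (e/2)" by simp
    also have "\<dots> \<le> real n * (e/2)" using e by (intro mult_right_mono) auto
    finally have b2: "\<bar>\<Sum>i\<in>{N..<n}. a i\<bar> \<le> real n * (e/2)" .
    have "\<bar>\<Sum>i<n. a i\<bar> \<le> C + real n * (e/2)" using b1 b2 split by linarith
    moreover have "C < real n * (e/2)"
    proof -
      have "real n > 2 * C / e" using M n by linarith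
      then have "real n * e > 2 * C" using e by (simp add: field_simps)
      then show ?thesis by simp
    qed
    ultimately have "\<bar>\<Sum>i<n. a i\<bar> < real n * e" by linarith
    then show "norm ((1 / real n) * (\<Sum>i<n. a i) - 0) < e"
      using npos by (simp add: abs_mult field_simps)
  qed
qed

lemma prod_emb_cyl:
  assumes "J \<subseteq> I"
  shows "prod_emb I (\<lambda>_. count_space UNIV) J (PiE J E) = {x \<in> PiE I (\<lambda>_. UNIV). \<forall>t\<in>J. x t \<in> E t}"
  using assms by (auto simp: prod_emb_def PiE_iff extensional_def)

lemma Xz_generator:
  "sets (Xz :: (int \<Rightarrow> 'e) measure) = sigma_sets UNIV (prod_algebra UNIV (\<lambda>_. count_space UNIV))"
  unfolding Xz_def sets_PiM by simp

lemma site_generator: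
  "sets (site_compl_algebra j :: (int \<Rightarrow> 'e) measure) =
     sigma_sets UNIV {(\<lambda>x. restrict x (- {j})) -` B \<inter> UNIV | B. B \<in> prod_algebra (- {j}) (\<lambda>_. count_space (UNIV::'e set))}"
proof -
  let ?r = "\<lambda>x::int \<Rightarrow> 'e. restrict x (- {j})"
  let ?M = "PiM (- {j}) (\<lambda>_. count_space (UNIV::'e set))"
  have r: "?r \<in> UNIV \<rightarrow> space ?M" by (auto simp: space_PiM)
  have "sets (site_compl_algebra j :: (int \<Rightarrow> 'e) measure) = {?r -` A \<inter> UNIV | A. A \<in> sets ?M}"
    unfolding site_compl_algebra_def using sets_vimage_algebra2[OF r[unfolded space_Xz[symmetric]]] by simp
  also have "\<dots> = {?r -` A \<inter> UNIV | A. A \<in> sigma_sets (space ?M) (prod_algebra (- {j}) (\<lambda>_. count_space (UNIV::'e set)))}"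
    by (simp add: sets_PiM space_PiM)
  also have "\<dots> = sigma_sets UNIV {?r -` A \<inter> UNIV | A. A \<in> prod_algebra (- {j}) (\<lambda>_. count_space (UNIV::'e set))}"
    by (rule sigma_sets_vimage_commute[OF r])
  finally show ?thesis .
qed

lemma lim_eq:
  fixes F G :: "nat \<Rightarrow> real"
  assumes r: "strict_mono r"
    and Lf: "(\<lambda>k. (1 / real (r k)) * (\<Sum>i<r k. F i)) \<longlonglongrightarrow> a"
    and Lg: "(\<lambda>k. (1 / real (r k)) * (\<Sum>i<r k. G i)) \<longlonglongrightarrow> b"
    and D: "(\<lambda>n. (1 / real n) * (\<Sum>i<n. F i - G i)) \<longlonglongrightarrow> 0"
  shows "a = b"
proof -
  have 1: "(\<lambda>k. (1 / real (r k)) * (\<Sum>i<r k. F i) - (1 / real (r k)) * (\<Sum>i<r k. G i)) \<longlonglongrightarrow> a - b"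
    by (rule tendsto_diff[OF Lf Lg])
  have "((\<lambda>n. (1 / real n) * (\<Sum>i<n. F i - G i)) \<circ> r) \<longlonglongrightarrow> 0"
    by (rule LIMSEQ_subseq_LIMSEQ[OF D r])
  then have 2: "(\<lambda>k. (1 / real (r k)) * (\<Sum>i<r k. F i) - (1 / real (r k)) * (\<Sum>i<r k. G i)) \<longlonglongrightarrow> 0"
    by (simp add: o_def sum_subtractf right_diff_distrib)
  have "a - b = 0" using LIMSEQ_unique[OF 1 2] .
  then show ?thesis by simp
qed

lemma weak_limD:
  assumes "weak_star_limit_point_avg \<mu> \<mu>0"
  obtains r where "prob_space \<mu>" "sets \<mu> = sets Xz" "strict_mono r"
    "\<And>f. continuous_map Xz_top euclideanreal f \<Longrightarrow>
        (\<lambda>k. (1 / real (r k)) * (\<Sum>i<r k. integral\<^sup>L (distr \<mu>0 Xz (shiftz ^^ i)) f)) \<longlonglongrightarrow> integral\<^sup>L \<mu> f"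
  using assms unfolding weak_star_limit_point_avg_def by blast

lemma UNIV_prod_algebra: "UNIV \<in> prod_algebra (UNIV :: int set) (\<lambda>_. count_space (UNIV :: 'e set))"
proof -
  have "prod_emb UNIV (\<lambda>_. count_space (UNIV :: 'e set)) {0::int} (PiE {0} (\<lambda>_. UNIV)) \<in> prod_algebra UNIV (\<lambda>_. count_space (UNIV :: 'e set))"
    by (rule prod_algebraI) auto
  moreover have "prod_emb UNIV (\<lambda>_. count_space (UNIV :: 'e set)) {0::int} (PiE {0} (\<lambda>_. UNIV)) = UNIV"
    by (subst prod_emb_cyl) auto
  ultimately show ?thesis by simp
qed

lemma translation_inv:
  fixes \<nu> :: "(nat \<Rightarrow> 'e::finite) measure"
  assumes pn: "prob_space \<nu>" "sets \<nu> = sets Xp"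
    and wl: "weak_star_limit_point_avg \<mu> (mu0 \<nu>)"
  shows "translation_invariant \<mu>"
proof -
  obtain r where pm: "prob_space \<mu>" and sm: "sets \<mu> = sets Xz" and r: "strict_mono r"
    and lim: "\<And>f. continuous_map Xz_top euclideanreal f \<Longrightarrow>
        (\<lambda>k. (1 / real (r k)) * (\<Sum>i<r k. integral\<^sup>L (distr (mu0 \<nu>) Xz (shiftz ^^ i)) f)) \<longlonglongrightarrow> integral\<^sup>L \<mu> f"
    using weak_limD[OF wl] by blast
  interpret pm: prob_space \<mu> by (rule pm)
  have p0: "prob_space (mu0 \<nu>)" "sets (mu0 \<nu>) = sets Xz" using mu0_props[OF pn] by auto
  let ?mi = "\<lambda>i. distr (mu0 \<nu>) Xz (shiftz ^^ i)"
  have pmi: "prob_space (?mi i)" "sets (?mi i) = sets Xz" for i using mui_props[OF p0] by auto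
  have sS: "shiftz \<in> measurable \<mu> Xz" by (subst measurable_cong_sets[OF sm refl]) (rule meas_shiftz)
  interpret pd: prob_space "distr \<mu> Xz shiftz" by (rule pm.prob_space_distr[OF sS])
  have smS: "(shiftz ^^ i) \<in> measurable (mu0 \<nu>) Xz" for i
    by (subst measurable_cong_sets[OF p0(2) refl]) (rule meas_shiftz_pow)
  let ?E = "prod_algebra (UNIV :: int set) (\<lambda>_. count_space (UNIV :: 'e set))"
  have eq: "emeasure (distr \<mu> Xz shiftz) X = emeasure \<mu> X" if X: "X \<in> ?E" for X
  proof -
    from prod_algebraE[OF X] obtain J E where XJ: "X = prod_emb UNIV (\<lambda>_. count_space (UNIV :: 'e set)) J (PiE J E)"
      and J: "finite J" by metis
    have X': "X = {x. \<forall>t\<in>J. x t \<in> E t}" using XJ by (simp add: prod_emb_cyl)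
    let ?f = "indicator X :: (int \<Rightarrow> 'e) \<Rightarrow> real"
    have cf: "continuous_map Xz_top euclideanreal ?f" unfolding X' by (rule cont_cyl_Xz[OF J])
    have cfS: "continuous_map Xz_top euclideanreal (\<lambda>w. ?f (shiftz w))"
      using continuous_map_compose[OF cont_shiftz cf] by (simp add: o_def)
    have XM: "X \<in> sets Xz" unfolding X' by (rule cyl_Xz[OF J])
    have fM: "?f \<in> borel_measurable Xz" by (rule borel_measurable_indicator[OF XM])
    define a where "a i = integral\<^sup>L (?mi i) ?f" for i
    have aS: "integral\<^sup>L (?mi i) (\<lambda>w. ?f (shiftz w)) = a (Suc i)" for i
    proof -
      have "integral\<^sup>L (?mi i) (\<lambda>w. ?f (shiftz w)) = (\<integral>w. ?f (shiftz ((shiftz ^^ i) w)) \<partial>mu0 \<nu>)"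
        using measurable_comp[OF meas_shiftz fM] by (intro integral_distr[OF smS]) (simp add: o_def)
      also have "\<dots> = (\<integral>w. ?f ((shiftz ^^ Suc i) w) \<partial>mu0 \<nu>)" by simp
      also have "\<dots> = a (Suc i)" unfolding a_def by (rule integral_distr[OF smS fM, symmetric])
      finally show ?thesis .
    qed
    have ab: "\<bar>a i\<bar> \<le> 1" for i
    proof -
      interpret pi: prob_space "?mi i" by (rule pmi(1))
      show ?thesis unfolding a_def by simp
    qed
    have "(\<lambda>n. (1 / real n) * (\<Sum>i<n. integral\<^sup>L (?mi i) (\<lambda>w. ?f (shiftz w)) - integral\<^sup>L (?mi i) ?f)) \<longlonglongrightarrow> 0"
    proof -
      have e: "(1 / real n) * (\<Sum>i<n. integral\<^sup>L (?mi i) (\<lambda>w. ?f (shiftz w)) - integral\<^sup>L (?mi i) ?f)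
          = (1 / real n) * (a n - a 0)" for n
        by (simp only: aS a_def[symmetric] sum_lessThan_telescope)
      have "(\<lambda>n. (1 / real n) * (a n - a 0)) \<longlonglongrightarrow> 0"
      proof (rule Lim_null_comparison)
        show "\<forall>\<^sub>F n in sequentially. norm ((1 / real n) * (a n - a 0)) \<le> 2 * (1 / real n)"
        proof (rule always_eventually, rule allI)
          fix n
          have "\<bar>a n - a 0\<bar> \<le> 2" using ab[of n] ab[of 0] by linarith
          then show "norm ((1 / real n) * (a n - a 0)) \<le> 2 * (1 / real n)"
            by (simp add: abs_mult divide_right_mono)
        qed
        show "(\<lambda>n. 2 * (1 / real n)) \<longlonglongrightarrow> 0"
          using tendsto_mult[OF tendsto_const lim_1_over_n, of 2] by simp
      qed
      then show ?thesis by (simp only: e)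
    qed
    then have ieq: "integral\<^sup>L \<mu> (\<lambda>w. ?f (shiftz w)) = integral\<^sup>L \<mu> ?f"
      by (rule lim_eq[OF r lim[OF cfS] lim[OF cf]])
    have "integral\<^sup>L \<mu> (\<lambda>w. ?f (shiftz w)) = integral\<^sup>L (distr \<mu> Xz shiftz) ?f"
      by (rule integral_distr[OF sS fM, symmetric])
    also have "\<dots> = measure (distr \<mu> Xz shiftz) X" using XM by simp
    finally have "measure (distr \<mu> Xz shiftz) X = measure \<mu> X"
      using ieq XM sm sets_eq_imp_space_eq[OF sm] by simp
    then show ?thesis by (simp add: pd.emeasure_eq_measure pm.emeasure_eq_measure)
  qed
  have "distr \<mu> Xz shiftz = \<mu>"
  proof (rule measure_eqI_generator_eq[where E="?E" and \<Omega>=UNIV and A="\<lambda>_. UNIV"])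
    show "Int_stable ?E" by (rule Int_stable_prod_algebra)
    show "?E \<subseteq> Pow UNIV" by simp
    show "\<And>X. X \<in> ?E \<Longrightarrow> emeasure (distr \<mu> Xz shiftz) X = emeasure \<mu> X" by (rule eq)
    show "sets (distr \<mu> Xz shiftz) = sigma_sets UNIV ?E" by (simp add: Xz_generator)
    show "sets \<mu> = sigma_sets UNIV ?E" by (simp add: sm Xz_generator)
    show "range (\<lambda>_. UNIV) \<subseteq> ?E" using UNIV_prod_algebra by auto
    show "(\<Union>i::nat. UNIV) = UNIV" by simp
    show "\<And>i::nat. emeasure (distr \<mu> Xz shiftz) UNIV \<noteq> \<infinity>" by (simp add: pd.emeasure_eq_measure)
  qed
  then show ?thesis unfolding translation_invariant_def .
qed

lemma prob_abs_bound:
  fixes f :: "'a \<Rightarrow> real"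
  assumes "prob_space M" "f \<in> borel_measurable M" "\<And>x. \<bar>f x\<bar> \<le> c"
  shows "\<bar>integral\<^sup>L M f\<bar> \<le> c"
proof -
  interpret prob_space M by (rule assms(1))
  have fm: "finite_measure M" by unfold_locales
  have "\<bar>integral\<^sup>L M f\<bar> \<le> (\<integral>x. \<bar>f x\<bar> \<partial>M)" by (rule integral_abs_bound)
  also have "\<dots> \<le> (\<integral>x. c \<partial>M)"
    by (rule integral_mono) (use assms in \<open>auto intro: bnd_int[OF fm, where B=c]\<close>)
  also have "\<dots> = c" by (simp add: prob_space)
  finally show ?thesis .
qed

lemma indicator_site: "(indicator {w. w j = \<sigma>} :: (int \<Rightarrow> 'e) \<Rightarrow> real) = indicator {x. \<forall>t\<in>{j}. x t \<in> {\<sigma>}}"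
  by (auto simp: indicator_def fun_eq_iff)

lemma cyl_dlr:
  fixes \<phi> :: "(nat \<Rightarrow> 'e::finite) \<Rightarrow> real"
  assumes hg: "half_line_gibbs \<phi> \<nu>" and phi: "continuous_map Xp_top euclideanreal \<phi>"
    and ext: "extensible \<phi>"
    and wl: "weak_star_limit_point_avg \<mu> (mu0 \<nu>)"
    and J: "finite J" "j \<notin> J"
  shows "(\<integral>w. indicator {x. \<forall>t\<in>J. x t \<in> V t} w * indicator {w. w j = \<sigma>} w \<partial>\<mu>)
       = (\<integral>w. indicator {x. \<forall>t\<in>J. x t \<in> V t} w * gamma_kernel \<phi> j \<sigma> w \<partial>\<mu>)"
proof -
  have pn: "prob_space \<nu>" "sets \<nu> = sets Xp" using hg unfolding half_line_gibbs_def by auto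
  obtain r where pm: "prob_space \<mu>" and sm: "sets \<mu> = sets Xz" and r: "strict_mono r"
    and lim: "\<And>f. continuous_map Xz_top euclideanreal f \<Longrightarrow>
        (\<lambda>k. (1 / real (r k)) * (\<Sum>i<r k. integral\<^sup>L (distr (mu0 \<nu>) Xz (shiftz ^^ i)) f)) \<longlonglongrightarrow> integral\<^sup>L \<mu> f"
    using weak_limD[OF wl] by blast
  have p0: "prob_space (mu0 \<nu>)" "sets (mu0 \<nu>) = sets Xz" using mu0_props[OF pn] by auto
  let ?mi = "\<lambda>i. distr (mu0 \<nu>) Xz (shiftz ^^ i)"
  have pmi: "prob_space (?mi i)" "sets (?mi i) = sets Xz" for i using mui_props[OF p0] by auto
  let ?A = "{x. \<forall>t\<in>J. x t \<in> V t}"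
  let ?g = "gamma_kernel \<phi> j \<sigma>"
  let ?f1 = "\<lambda>w. indicator ?A w * indicator {w. w j = \<sigma>} w :: real"
  let ?f2 = "\<lambda>w. indicator ?A w * ?g w :: real"
  have cA: "continuous_map Xz_top euclideanreal (indicator ?A :: _ \<Rightarrow> real)" by (rule cont_cyl_Xz[OF J(1)])
  have cs: "continuous_map Xz_top euclideanreal (indicator {w. w j = \<sigma>} :: (int \<Rightarrow> 'e) \<Rightarrow> real)"
    unfolding indicator_site by (rule cont_cyl_Xz) simp
  have cg: "continuous_map Xz_top euclideanreal ?g" by (rule cont_gamma[OF phi ext])
  have c1: "continuous_map Xz_top euclideanreal ?f1" by (rule continuous_map_real_mult[OF cA cs])
  have c2: "continuous_map Xz_top euclideanreal ?f2" by (rule continuous_map_real_mult[OF cA cg])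
  have AM: "(indicator ?A :: _ \<Rightarrow> real) \<in> borel_measurable Xz" by (rule borel_measurable_indicator[OF cyl_Xz[OF J(1)]])
  have gM: "?g \<in> borel_measurable Xz" by (rule cont_meas_Xz[OF cg])
  have Fm: "(\<lambda>i. integral\<^sup>L (?mi i) ?f1 - integral\<^sup>L (?mi i) ?f2) \<longlonglongrightarrow> 0"
  proof (rule LIMSEQ_I)
    fix e :: real assume e: "e > 0"
    have ev1: "\<forall>\<^sub>F i in sequentially. j + int i \<ge> 0"
      by (rule eventually_sequentiallyI[of "nat (- j)"]) auto
    have ev2: "\<forall>\<^sub>F i in sequentially. \<forall>t\<in>J. t + int i \<ge> 0"
    proof (rule eventually_ball_finite[OF J(1)], rule ballI)
      fix t show "\<forall>\<^sub>F i in sequentially. t + int i \<ge> 0"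
        by (rule eventually_sequentiallyI[of "nat (- t)"]) auto
    qed
    have e2: "e/2 > 0" using e by simp
    have ev3: "\<forall>\<^sub>F i in sequentially. \<forall>w. \<bar>gp \<phi> j \<sigma> i w - ?g w\<bar> < e/2"
      by (rule gamma_unif(1)[OF ext e2])
    have "\<forall>\<^sub>F i in sequentially. norm (integral\<^sup>L (?mi i) ?f1 - integral\<^sup>L (?mi i) ?f2 - 0) < e"
      using ev1 ev2 ev3
    proof eventually_elim
      case (elim i)
      have gpM: "gp \<phi> j \<sigma> i \<in> borel_measurable Xz" by (rule cont_meas_Xz[OF cont_gp[OF phi]])
      have ex: "integral\<^sup>L (?mi i) ?f1 = (\<integral>w. indicator ?A w * gp \<phi> j \<sigma> i w \<partial>?mi i)"
        by (rule exact_identity[OF hg phi J elim(1)]) (use elim(2) in auto)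
      have m1: "(\<lambda>w. indicator ?A w * gp \<phi> j \<sigma> i w) \<in> borel_measurable (?mi i)"
        by (subst measurable_cong_sets[OF pmi(2) refl]) (rule borel_measurable_times[OF AM gpM])
      have m2: "?f2 \<in> borel_measurable (?mi i)"
        by (subst measurable_cong_sets[OF pmi(2) refl]) (rule borel_measurable_times[OF AM gM])
      have fm: "finite_measure (?mi i)" using pmi(1) by (simp add: prob_space_def)
      have i1: "integrable (?mi i) (\<lambda>w. indicator ?A w * gp \<phi> j \<sigma> i w)"
      proof (rule bnd_int[OF fm m1, where B=1])
        fix w
        have "0 < gp \<phi> j \<sigma> i w" "gp \<phi> j \<sigma> i w \<le> 1" by (rule gp_bounds)+
        then show "\<bar>indicator ?A w * gp \<phi> j \<sigma> i w\<bar> \<le> 1" by (simp add: indicator_def)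
      qed
      have i2: "integrable (?mi i) ?f2"
      proof (rule bnd_int[OF fm m2, where B=1])
        fix w
        have "0 < ?g w" "?g w \<le> 1" by (rule gamma_unif(2,3)[OF ext])+
        then show "\<bar>?f2 w\<bar> \<le> 1" by (simp add: indicator_def)
      qed
      have "integral\<^sup>L (?mi i) ?f1 - integral\<^sup>L (?mi i) ?f2
          = (\<integral>w. indicator ?A w * gp \<phi> j \<sigma> i w - ?f2 w \<partial>?mi i)"
        unfolding ex by (rule Bochner_Integration.integral_diff[OF i1 i2, symmetric])
      also have "\<bar>\<dots>\<bar> \<le> e/2"
      proof (rule prob_abs_bound[OF pmi(1)])
        show "(\<lambda>w. indicator ?A w * gp \<phi> j \<sigma> i w - ?f2 w) \<in> borel_measurable (?mi i)"
          using m1 m2 by (rule borel_measurable_diff)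
        fix w
        have "\<bar>indicator ?A w * gp \<phi> j \<sigma> i w - ?f2 w\<bar> = indicator ?A w * \<bar>gp \<phi> j \<sigma> i w - ?g w\<bar>"
          by (simp add: indicator_def)
        also have "\<dots> \<le> e/2" using elim(3)[rule_format, of w] e by (auto simp: indicator_def)
        finally show "\<bar>indicator ?A w * gp \<phi> j \<sigma> i w - ?f2 w\<bar> \<le> e/2" .
      qed
      finally show ?case using e by simp
    qed
    then show "\<exists>no. \<forall>n\<ge>no. norm (integral\<^sup>L (?mi n) ?f1 - integral\<^sup>L (?mi n) ?f2 - 0) < e"
      unfolding eventually_sequentially .
  qed
  show ?thesis
    by (rule lim_eq[OF r lim[OF c1] lim[OF c2] cesaro0[OF Fm]])
qed

lemma site_sub: "sets (site_compl_algebra j) \<subseteq> sets (Xz :: (int \<Rightarrow> 'e) measure)"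
  unfolding site_compl_algebra_def
  by (rule sets_image_in_sets) (auto simp: Xz_def intro: measurable_restrict_subset)

lemma space_site[simp]: "space (site_compl_algebra j) = UNIV"
  unfolding site_compl_algebra_def by simp

lemma gamma_site_meas:
  fixes \<phi> :: "(nat \<Rightarrow> 'e::finite) \<Rightarrow> real"
  assumes phi: "continuous_map Xp_top euclideanreal \<phi>" and ext: "extensible \<phi>"
  shows "gamma_kernel \<phi> j \<sigma> \<in> borel_measurable (site_compl_algebra j)"
proof -
  define ex :: "(int \<Rightarrow> 'e) \<Rightarrow> int \<Rightarrow> 'e" where "ex y = (\<lambda>t. if t = j then \<sigma> else y t)" for y
  have e: "ex (restrict w (- {j})) = w(j:=\<sigma>)" for w by (auto simp: ex_def)
  have inv: "gamma_kernel \<phi> j \<sigma> (w(j:=\<sigma>)) = gamma_kernel \<phi> j \<sigma> w" for w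
    unfolding gamma_kernel_def by simp
  have m1: "ex \<in> measurable (PiM (- {j}) (\<lambda>_. count_space UNIV)) Xz"
    unfolding ex_def
  proof (intro meas_into_Xz)
    fix k
    show "(\<lambda>w. if k = j then \<sigma> else w k) \<in> PiM (- {j}) (\<lambda>_. count_space UNIV) \<rightarrow>\<^sub>M count_space UNIV"
      by (cases "k = j") (auto intro!: measurable_component_singleton)
  qed
  have gM: "gamma_kernel \<phi> j \<sigma> \<in> borel_measurable Xz" by (rule cont_meas_Xz[OF cont_gamma[OF phi ext]])
  have "(\<lambda>x. restrict x (- {j})) \<in> measurable (site_compl_algebra j) (PiM (- {j}) (\<lambda>_. count_space (UNIV::'e set)))"
    unfolding site_compl_algebra_def by (rule measurable_vimage_algebra1) (auto simp: space_PiM)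
  from measurable_comp[OF this measurable_comp[OF m1 gM]]
  show ?thesis by (simp add: o_def e inv)
qed

lemma dlr_all:
  fixes \<phi> :: "(nat \<Rightarrow> 'e::finite) \<Rightarrow> real"
  assumes hg: "half_line_gibbs \<phi> \<nu>" and phi: "continuous_map Xp_top euclideanreal \<phi>"
    and ext: "extensible \<phi>"
    and wl: "weak_star_limit_point_avg \<mu> (mu0 \<nu>)"
    and A: "A \<in> sets (site_compl_algebra j)"
  shows "(LINT x:A|\<mu>. indicator {w. w j = \<sigma>} x) = (LINT x:A|\<mu>. gamma_kernel \<phi> j \<sigma> x)"
proof -
  have pm: "prob_space \<mu>" and sm: "sets \<mu> = sets Xz" using wl unfolding weak_star_limit_point_avg_def by auto
  interpret pm: prob_space \<mu> by (rule pm)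
  have fm: "finite_measure \<mu>" by unfold_locales
  let ?g = "gamma_kernel \<phi> j \<sigma>"
  let ?s = "indicator {w. w j = \<sigma>} :: (int \<Rightarrow> 'e) \<Rightarrow> real"
  let ?r = "\<lambda>x::int \<Rightarrow> 'e. restrict x (- {j})"
  let ?G = "{?r -` B \<inter> UNIV | B. B \<in> prod_algebra (- {j}) (\<lambda>_. count_space (UNIV::'e set))}"
  have gM: "?g \<in> borel_measurable \<mu>"
    by (subst measurable_cong_sets[OF sm refl]) (rule cont_meas_Xz[OF cont_gamma[OF phi ext]])
  have sM: "?s \<in> borel_measurable \<mu>"
  proof -
    have "{w. w j = \<sigma>} \<in> sets (Xz :: (int \<Rightarrow> 'e) measure)"
      using cyl_Xz[of "{j}" "\<lambda>_. {\<sigma>}"] by (simp add: indicator_site)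
    then show ?thesis using sm by simp
  qed
  have gb: "\<bar>?g x\<bar> \<le> 1" for x using gamma_unif(2,3)[OF ext, of j \<sigma> x] by simp
  have sb: "\<bar>?s x\<bar> \<le> 1" for x by (simp add: indicator_def)
  have setint: "set_integrable \<mu> S f" if "S \<in> sets \<mu>" "f \<in> borel_measurable \<mu>" "\<And>x. \<bar>f x\<bar> \<le> 1" for S and f :: "_ \<Rightarrow> real"
    unfolding set_integrable_def
  proof (rule bnd_int[OF fm _, where B=1])
    show "(\<lambda>x. indicator S x *\<^sub>R f x) \<in> borel_measurable \<mu>" using that by measurable
    show "\<bar>indicator S x *\<^sub>R f x\<bar> \<le> 1" for x using that(3)[of x] by (simp add: indicator_def)
  qed
  have AG: "A \<in> sigma_sets UNIV ?G" using A site_generator by blast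
  have sub: "sigma_sets UNIV ?G \<subseteq> sets \<mu>" using site_generator site_sub sm by blast
have IS: "Int_stable ?G"
  proof (rule Int_stableI)
    fix a b assume "a \<in> ?G" "b \<in> ?G"
    then obtain B1 B2 where B: "B1 \<in> prod_algebra (- {j}) (\<lambda>_. count_space (UNIV::'e set))"
      "B2 \<in> prod_algebra (- {j}) (\<lambda>_. count_space (UNIV::'e set))"
      and ab: "a = ?r -` B1 \<inter> UNIV" "b = ?r -` B2 \<inter> UNIV" by blast
    have "B1 \<inter> B2 \<in> prod_algebra (- {j}) (\<lambda>_. count_space (UNIV::'e set))"
      using Int_stable_prod_algebra B unfolding Int_stable_def by blast
    moreover have "a \<inter> b = ?r -` (B1 \<inter> B2) \<inter> UNIV" using ab by auto
    ultimately show "a \<inter> b \<in> ?G" by blast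
  qed
have PW: "?G \<subseteq> Pow UNIV" by simp

  show ?thesis using IS PW AG
  proof (induction rule: sigma_sets_induct_disjoint)
    case (basic S)
    then obtain B where B: "B \<in> prod_algebra (- {j}) (\<lambda>_. count_space (UNIV::'e set))" and S: "S = ?r -` B \<inter> UNIV"
      by blast
    from prod_algebraE[OF B] obtain J E where BJ: "B = prod_emb (- {j}) (\<lambda>_. count_space (UNIV::'e set)) J (PiE J E)"
      and J: "finite J" "J \<subseteq> - {j}" by metis
    have S': "S = {x. \<forall>t\<in>J. x t \<in> E t}"
      unfolding S BJ prod_emb_cyl[OF J(2)] using J(2) by auto
    have jJ: "j \<notin> J" using J(2) by auto
    have "(\<integral>w. indicator S w * ?s w \<partial>\<mu>) = (\<integral>w. indicator S w * ?g w \<partial>\<mu>)"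
      unfolding S' by (rule cyl_dlr[OF hg phi ext wl J(1) jJ])
    then show ?case by (simp add: set_lebesgue_integral_def)
  next
    case empty
    then show ?case by (simp add: set_lebesgue_integral_def)
  next
    case (compl S)
    have SM: "S \<in> sets \<mu>" using compl(1) sub by blast
    have whole: "(\<integral>w. ?s w \<partial>\<mu>) = (\<integral>w. ?g w \<partial>\<mu>)"
      using cyl_dlr[OF hg phi ext wl, of "{}" j "\<lambda>_. UNIV" \<sigma>] by simp
    have i1: "integrable \<mu> ?s" by (rule bnd_int[OF fm sM sb])
    have i2: "integrable \<mu> ?g" by (rule bnd_int[OF fm gM gb])
    have iS1: "integrable \<mu> (\<lambda>x. indicator S x *\<^sub>R ?s x)" using setint[OF SM sM sb] unfolding set_integrable_def .
    have iS2: "integrable \<mu> (\<lambda>x. indicator S x *\<^sub>R ?g x)" using setint[OF SM gM gb] unfolding set_integrable_def .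
    have d: "indicator (UNIV - S) x *\<^sub>R f x = f x - indicator S x *\<^sub>R f x" for f :: "_ \<Rightarrow> real" and x
      by (simp add: indicator_def)
    have "(LINT x:(UNIV - S)|\<mu>. ?s x) = (\<integral>w. ?s w \<partial>\<mu>) - (LINT x:S|\<mu>. ?s x)"
      unfolding set_lebesgue_integral_def d by (rule Bochner_Integration.integral_diff[OF i1 iS1])
    also have "\<dots> = (\<integral>w. ?g w \<partial>\<mu>) - (LINT x:S|\<mu>. ?g x)" using whole compl(2) by simp
    also have "\<dots> = (LINT x:(UNIV - S)|\<mu>. ?g x)"
      unfolding set_lebesgue_integral_def d by (rule Bochner_Integration.integral_diff[OF i2 iS2, symmetric])
    finally show ?case .
  next
    case (union F)
    have FM: "F i \<in> sets \<mu>" for i using union(2) sub by blast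
    have disj: "i \<noteq> k \<Longrightarrow> F i \<inter> F k = {}" for i k using union(1) unfolding disjoint_family_on_def by auto
    have UM: "(\<Union>i. F i) \<in> sets \<mu>" using FM by blast
    have "(LINT x:(\<Union>i. F i)|\<mu>. ?s x) = (\<Sum>i. (LINT x:(F i)|\<mu>. ?s x))"
      by (rule lebesgue_integral_countable_add[OF FM disj setint[OF UM sM sb]])
    also have "\<dots> = (\<Sum>i. (LINT x:(F i)|\<mu>. ?g x))" using union(3) by simp
    also have "\<dots> = (LINT x:(\<Union>i. F i)|\<mu>. ?g x)"
      by (rule lebesgue_integral_countable_add[OF FM disj setint[OF UM gM gb], symmetric])
    finally show ?case .
  qed
qed

theorem theoremB:
  fixes \<phi> :: "(nat \<Rightarrow> 'e::finite) \<Rightarrow> real"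
    and \<nu> :: "(nat \<Rightarrow> 'e) measure"
    and \<mu> :: "(int \<Rightarrow> 'e) measure"
  assumes "continuous_map Xp_top euclideanreal \<phi>"
    and "extensible \<phi>"
    and "half_line_gibbs \<phi> \<nu>"
    and "weak_star_limit_point_avg \<mu> (mu0 \<nu>)"
  shows "translation_invariant \<mu> \<and> gibbs_whole_line \<phi> \<mu>"
proof -
  note phi = assms(1) and ext = assms(2) and hg = assms(3) and wl = assms(4)
  have pn: "prob_space \<nu>" "sets \<nu> = sets Xp" using hg unfolding half_line_gibbs_def by auto
  have pm: "prob_space \<mu>" and sm: "sets \<mu> = sets Xz" using wl unfolding weak_star_limit_point_avg_def by auto
  interpret pm: prob_space \<mu> by (rule pm)
  have fm: "finite_measure \<mu>" by unfold_locales
  have spm: "space \<mu> = UNIV" using sets_eq_imp_space_eq[OF sm] by simp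
  have TI: "translation_invariant \<mu>" by (rule translation_inv[OF pn wl])
  have "\<forall>i \<sigma>. AE w in \<mu>.
        real_cond_exp \<mu> (restr_to_subalg \<mu> (site_compl_algebra i)) (indicator {x. x i = \<sigma>}) w
        = gamma_kernel \<phi> i \<sigma> w"
  proof (intro allI)
    fix i :: int and \<sigma> :: 'e
    let ?S = "site_compl_algebra i :: (int \<Rightarrow> 'e) measure"
    let ?F = "restr_to_subalg \<mu> ?S"
    let ?g = "gamma_kernel \<phi> i \<sigma>"
    let ?f = "indicator {x. x i = \<sigma>} :: (int \<Rightarrow> 'e) \<Rightarrow> real"
    have subS: "subalgebra \<mu> ?S" unfolding subalgebra_def using site_sub sm spm by auto
    have sF: "sets ?F = sets ?S" by (rule sets_restr_to_subalg[OF subS])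
    have subF: "subalgebra \<mu> ?F" unfolding subalgebra_def
      using sF space_restr_to_subalg[of \<mu> ?S] subS unfolding subalgebra_def by auto
    interpret fms: finite_measure_subalgebra \<mu> ?F
      by unfold_locales (rule subF)
    have gM: "?g \<in> borel_measurable \<mu>"
      by (subst measurable_cong_sets[OF sm refl]) (rule cont_meas_Xz[OF cont_gamma[OF phi ext]])
    have sM: "?f \<in> borel_measurable \<mu>"
    proof -
      have "{w. w i = \<sigma>} \<in> sets (Xz :: (int \<Rightarrow> 'e) measure)"
        using cyl_Xz[of "{i}" "\<lambda>_. {\<sigma>}"] by (simp add: indicator_site)
      then show ?thesis using sm by simp
    qed
    have gb: "\<bar>?g x\<bar> \<le> 1" for x using gamma_unif(2,3)[OF ext, of i \<sigma> x] by simp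
    have sb: "\<bar>?f x\<bar> \<le> 1" for x by (simp add: indicator_def)
    show "AE w in \<mu>. real_cond_exp \<mu> ?F ?f w = ?g w"
    proof (rule fms.real_cond_exp_charact)
      fix A assume "A \<in> sets ?F"
      then have "A \<in> sets ?S" using sF by simp
      then show "(LINT x:A|\<mu>. ?f x) = (LINT x:A|\<mu>. ?g x)"
        by (rule dlr_all[OF hg phi ext wl])
    next
      show "integrable \<mu> ?f" by (rule bnd_int[OF fm sM sb])
      show "integrable \<mu> ?g" by (rule bnd_int[OF fm gM gb])
      show "?g \<in> borel_measurable ?F"
        by (subst measurable_cong_sets[OF sF refl]) (rule gamma_site_meas[OF phi ext])
    qed
  qed
  then have "gibbs_whole_line \<phi> \<mu>" unfolding gibbs_whole_line_def using pm sm by blast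
  then show ?thesis using TI by simp
qed

end
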